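(* Let $\mathsf{K}$ be one of the varieties $\mathsf{ISL}$, $\mathsf{bISL}$, $\mathsf{PDL}$, $\mathsf{IL}$, $\mathsf{HA}$ (defined in the context), and let $\boldsymbol{A} \in \mathsf{K}$. Then there exist a Heyting algebra $\boldsymbol{B}$ and an embedding of $\boldsymbol{A}$ into the reduct $\boldsymbol{B}^-$ of $\boldsymbol{B}$ to the language of $\mathsf{K}$, such that $\boldsymbol{B}^- \in \mathbb{U}(\boldsymbol{A})$, where $\mathbb{U}(\boldsymbol{A}) = \mathbb{I}\mathbb{S}\mathbb{P}_{u}(\boldsymbol{A})$ is the least universal class containing $\boldsymbol{A}$ (equivalently, $\boldsymbol{B}^-$ satisfies every universal first-order sentence true in $\boldsymbol{A}$).
   Context: A semilattice $\langle A;\land\rangle$ is ordered by $a \le b$ iff $a\land b = a$. The varieties are: $\mathsf{ISL}$ (implicative semilattices), algebras $\langle A;\land,\to,1\rangle$ where $\langle A;\land\rangle$ is a semilattice with maximum $1$ and $c\land a\le b \iff c \le a\to b$ for all $a,b,c$; $\mathsf{bISL}$ (bounded implicative semilattices), algebras $\langle A;\land,\to,0,1\rangle$ where $\langle A;\land,\to,1\rangle\in\mathsf{ISL}$ and $0$ is the minimum; $\mathsf{PDL}$ (pseudocomplemented distributive lattices), algebras $\langle A;\land,\lor,\lnot,0,1\rangle$ where $\langle A;\land,\lor\rangle$ is a distributive lattice with minimum $0$ and maximum $1$ and $c\land a = 0 \iff c\le \lnot a$; $\mathsf{IL}$ (implicative lattices), algebras $\langle A;\land,\lor,\to,1\rangle$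 that are lattices whose meet-semilattice reduct with $\to,1$ is in $\mathsf{ISL}$; $\mathsf{HA}$ (Heyting algebras), algebras $\langle A;\land,\lor,\to,0,1\rangle$ that are implicative lattices with minimum $0$. Each of these is the class of subreducts of Heyting algebras in the respective language. The universal class generated by a class of algebras is the class of all algebras satisfying all universal sentences it satisfies; it equals $\mathbb{I}\mathbb{S}\mathbb{P}_u$ of the class (isomorphic copies of subalgebras of ultraproducts). *)

theory Defs
  imports Main
begin

text \<open>An algebra is given by a carrier and interpretations of all symbols
  meet, join, implication, negation, 0, 1. For a variety K only the symbols of
  the language of K are relevant; the others are ignored.\<close>

record 'a halg =
  car :: "'a set"
  mt  :: "'a \<Rightarrow> 'a \<Rightarrow> 'a"
  jn  :: "'a \<Rightarrow> 'a \<Rightarrow> 'a"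
  im  :: "'a \<Rightarrow> 'a \<Rightarrow> 'a"
  ng  :: "'a \<Rightarrow> 'a"
  bt  :: "'a"
  tp  :: "'a"

datatype lang = ISL | bISL | PDL | IL | HA

fun has_join :: "lang \<Rightarrow> bool" where
  "has_join ISL = False" | "has_join bISL = False" | "has_join PDL = True"
| "has_join IL = True" | "has_join HA = True"

fun has_imp :: "lang \<Rightarrow> bool" where
  "has_imp ISL = True" | "has_imp bISL = True" | "has_imp PDL = False"
| "has_imp IL = True" | "has_imp HA = True"

fun has_neg :: "lang \<Rightarrow> bool" where
  "has_neg ISL = False" | "has_neg bISL = False" | "has_neg PDL = True"
| "has_neg IL = False" | "has_neg HA = False"

fun has_bot :: "lang \<Rightarrow> bool" where
  "has_bot ISL = False" | "has_bot bISL = True" | "has_bot PDL = True"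
| "has_bot IL = False" | "has_bot HA = True"

definition hle :: "('a, 'b) halg_scheme \<Rightarrow> 'a \<Rightarrow> 'a \<Rightarrow> bool" where
  "hle A x y \<longleftrightarrow> mt A x y = x"

definition meet_semilattice :: "('a, 'b) halg_scheme \<Rightarrow> bool" where
  "meet_semilattice A \<longleftrightarrow>
     (\<forall>x\<in>car A. \<forall>y\<in>car A. mt A x y \<in> car A) \<and>
     (\<forall>x\<in>car A. \<forall>y\<in>car A. \<forall>z\<in>car A. mt A (mt A x y) z = mt A x (mt A y z)) \<and>
     (\<forall>x\<in>car A. \<forall>y\<in>car A. mt A x y = mt A y x) \<and>
     (\<forall>x\<in>car A. mt A x x = x)"

definition is_lattice :: "('a, 'b) halg_scheme \<Rightarrow> bool" where
  "is_lattice A \<longleftrightarrow> meet_semilattice A \<and>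
     (\<forall>x\<in>car A. \<forall>y\<in>car A. jn A x y \<in> car A) \<and>
     (\<forall>x\<in>car A. \<forall>y\<in>car A. \<forall>z\<in>car A. jn A (jn A x y) z = jn A x (jn A y z)) \<and>
     (\<forall>x\<in>car A. \<forall>y\<in>car A. jn A x y = jn A y x) \<and>
     (\<forall>x\<in>car A. jn A x x = x) \<and>
     (\<forall>x\<in>car A. \<forall>y\<in>car A. mt A x (jn A x y) = x) \<and>
     (\<forall>x\<in>car A. \<forall>y\<in>car A. jn A x (mt A x y) = x)"

definition is_distributive :: "('a, 'b) halg_scheme \<Rightarrow> bool" where
  "is_distributive A \<longleftrightarrow>
     (\<forall>x\<in>car A. \<forall>y\<in>car A. \<forall>z\<in>car A. mt A x (jn A y z) = jn A (mt A x y) (mt A x z))"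

definition top_max :: "('a, 'b) halg_scheme \<Rightarrow> bool" where
  "top_max A \<longleftrightarrow> tp A \<in> car A \<and> (\<forall>x\<in>car A. hle A x (tp A))"

definition bot_min :: "('a, 'b) halg_scheme \<Rightarrow> bool" where
  "bot_min A \<longleftrightarrow> bt A \<in> car A \<and> (\<forall>x\<in>car A. hle A (bt A) x)"

definition residuated :: "('a, 'b) halg_scheme \<Rightarrow> bool" where
  "residuated A \<longleftrightarrow>
     (\<forall>x\<in>car A. \<forall>y\<in>car A. im A x y \<in> car A) \<and>
     (\<forall>a\<in>car A. \<forall>b\<in>car A. \<forall>c\<in>car A. hle A (mt A c a) b \<longleftrightarrow> hle A c (im A a b))"

definition pseudocomplemented :: "('a, 'b) halg_scheme \<Rightarrow> bool" where
  "pseudocomplemented A \<longleftrightarrow>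
     (\<forall>x\<in>car A. ng A x \<in> car A) \<and>
     (\<forall>a\<in>car A. \<forall>c\<in>car A. mt A c a = bt A \<longleftrightarrow> hle A c (ng A a))"

fun in_var :: "lang \<Rightarrow> ('a, 'b) halg_scheme \<Rightarrow> bool" where
  "in_var ISL A \<longleftrightarrow> meet_semilattice A \<and> top_max A \<and> residuated A"
| "in_var bISL A \<longleftrightarrow> meet_semilattice A \<and> top_max A \<and> residuated A \<and> bot_min A"
| "in_var PDL A \<longleftrightarrow> is_lattice A \<and> is_distributive A \<and> bot_min A \<and> top_max A
                      \<and> pseudocomplemented A"
| "in_var IL A \<longleftrightarrow> is_lattice A \<and> top_max A \<and> residuated A"
| "in_var HA A \<longleftrightarrow> is_lattice A \<and> top_max A \<and> residuated A \<and> bot_min A"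

text \<open>Reduct of a Heyting algebra to the language of K: all basic operations are
  kept, and the negation symbol (only used in the language of PDL) is interpreted
  as the term-operation x \<rightarrow> 0.\<close>
definition reduct :: "'a halg \<Rightarrow> 'a halg" where
  "reduct B = B\<lparr>ng := (\<lambda>x. im B x (bt B))\<rparr>"

datatype trm = V nat | TMt trm trm | TJn trm trm | TIm trm trm | TNg trm | TBt | TTp

fun trm_in :: "lang \<Rightarrow> trm \<Rightarrow> bool" where
  "trm_in K (V n) = True"
| "trm_in K (TMt s t) = (trm_in K s \<and> trm_in K t)"
| "trm_in K (TJn s t) = (has_join K \<and> trm_in K s \<and> trm_in K t)"
| "trm_in K (TIm s t) = (has_imp K \<and> trm_in K s \<and> trm_in K t)"
| "trm_in K (TNg s) = (has_neg K \<and> trm_in K s)"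
| "trm_in K TBt = has_bot K"
| "trm_in K TTp = True"

fun eval :: "('a, 'b) halg_scheme \<Rightarrow> (nat \<Rightarrow> 'a) \<Rightarrow> trm \<Rightarrow> 'a" where
  "eval A \<sigma> (V n) = \<sigma> n"
| "eval A \<sigma> (TMt s t) = mt A (eval A \<sigma> s) (eval A \<sigma> t)"
| "eval A \<sigma> (TJn s t) = jn A (eval A \<sigma> s) (eval A \<sigma> t)"
| "eval A \<sigma> (TIm s t) = im A (eval A \<sigma> s) (eval A \<sigma> t)"
| "eval A \<sigma> (TNg s) = ng A (eval A \<sigma> s)"
| "eval A \<sigma> TBt = bt A"
| "eval A \<sigma> TTp = tp A"

text \<open>Quantifier-free formulas; a universal sentence is the universal closure of one.\<close>
datatype fm = FEq trm trm | FNot fm | FAnd fm fm | FOr fm fm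

fun fm_in :: "lang \<Rightarrow> fm \<Rightarrow> bool" where
  "fm_in K (FEq s t) = (trm_in K s \<and> trm_in K t)"
| "fm_in K (FNot p) = fm_in K p"
| "fm_in K (FAnd p q) = (fm_in K p \<and> fm_in K q)"
| "fm_in K (FOr p q) = (fm_in K p \<and> fm_in K q)"

fun holds :: "('a, 'b) halg_scheme \<Rightarrow> (nat \<Rightarrow> 'a) \<Rightarrow> fm \<Rightarrow> bool" where
  "holds A \<sigma> (FEq s t) = (eval A \<sigma> s = eval A \<sigma> t)"
| "holds A \<sigma> (FNot p) = (\<not> holds A \<sigma> p)"
| "holds A \<sigma> (FAnd p q) = (holds A \<sigma> p \<and> holds A \<sigma> q)"
| "holds A \<sigma> (FOr p q) = (holds A \<sigma> p \<or> holds A \<sigma> q)"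

definition univ_true :: "('a, 'b) halg_scheme \<Rightarrow> fm \<Rightarrow> bool" where
  "univ_true A p \<longleftrightarrow> (\<forall>\<sigma>. (\<forall>n. \<sigma> n \<in> car A) \<longrightarrow> holds A \<sigma> p)"

definition in_U :: "lang \<Rightarrow> ('a, 'b) halg_scheme \<Rightarrow> ('c, 'd) halg_scheme \<Rightarrow> bool" where
  "in_U K A C \<longleftrightarrow> (\<forall>p. fm_in K p \<longrightarrow> univ_true A p \<longrightarrow> univ_true C p)"

definition emb :: "lang \<Rightarrow> ('a, 'b) halg_scheme \<Rightarrow> ('c, 'd) halg_scheme \<Rightarrow> ('a \<Rightarrow> 'c) \<Rightarrow> bool" where
  "emb K A C e \<longleftrightarrow>
     e ` car A \<subseteq> car C \<and> inj_on e (car A) \<and>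
     (\<forall>x\<in>car A. \<forall>y\<in>car A. e (mt A x y) = mt C (e x) (e y)) \<and>
     (has_join K \<longrightarrow> (\<forall>x\<in>car A. \<forall>y\<in>car A. e (jn A x y) = jn C (e x) (e y))) \<and>
     (has_imp K \<longrightarrow> (\<forall>x\<in>car A. \<forall>y\<in>car A. e (im A x y) = im C (e x) (e y))) \<and>
     (has_neg K \<longrightarrow> (\<forall>x\<in>car A. e (ng A x) = ng C (e x))) \<and>
     (has_bot K \<longrightarrow> e (bt A) = bt C) \<and>
     e (tp A) = tp C"

end

theory Submission
  imports Defs
begin

locale msl =
  fixes A :: "('a, 'b) halg_scheme"
  assumes msl: "meet_semilattice A"
begin

lemma mt_closed[intro, simp]: "x \<in> car A \<Longrightarrow> y \<in> car A \<Longrightarrow> mt A x y \<in> car A"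
  using msl unfolding meet_semilattice_def by blast
lemma mt_assoc: "x \<in> car A \<Longrightarrow> y \<in> car A \<Longrightarrow> z \<in> car A \<Longrightarrow> mt A (mt A x y) z = mt A x (mt A y z)"
  using msl unfolding meet_semilattice_def by blast
lemma mt_comm: "x \<in> car A \<Longrightarrow> y \<in> car A \<Longrightarrow> mt A x y = mt A y x"
  using msl unfolding meet_semilattice_def by blast
lemma mt_idem[simp]: "x \<in> car A \<Longrightarrow> mt A x x = x"
  using msl unfolding meet_semilattice_def by blast

lemma le_refl[simp]: "x \<in> car A \<Longrightarrow> hle A x x"
  by (simp add: hle_def)
lemma le_antisym: "x \<in> car A \<Longrightarrow> y \<in> car A \<Longrightarrow> hle A x y \<Longrightarrow> hle A y x \<Longrightarrow> x = y"
  unfolding hle_def using mt_comm by force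
lemma le_trans: "x \<in> car A \<Longrightarrow> y \<in> car A \<Longrightarrow> z \<in> car A \<Longrightarrow> hle A x y \<Longrightarrow> hle A y z \<Longrightarrow> hle A x z"
  unfolding hle_def using mt_assoc[of x y z] by simp
lemma meet_le1[simp]: "x \<in> car A \<Longrightarrow> y \<in> car A \<Longrightarrow> hle A (mt A x y) x"
  unfolding hle_def using mt_assoc[of x y x] mt_comm[of y x] mt_assoc[of x x y] by simp
lemma meet_le2[simp]: "x \<in> car A \<Longrightarrow> y \<in> car A \<Longrightarrow> hle A (mt A x y) y"
  unfolding hle_def using mt_assoc[of x y y] by simp
lemma meet_glb: "x \<in> car A \<Longrightarrow> y \<in> car A \<Longrightarrow> z \<in> car A \<Longrightarrow> hle A z x \<Longrightarrow> hle A z y \<Longrightarrow> hle A z (mt A x y)"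
  unfolding hle_def using mt_assoc[of z x y] by simp
lemma le_meet_iff: "x \<in> car A \<Longrightarrow> y \<in> car A \<Longrightarrow> z \<in> car A \<Longrightarrow> hle A z (mt A x y) \<longleftrightarrow> hle A z x \<and> hle A z y"
proof -
  assume c: "x \<in> car A" "y \<in> car A" "z \<in> car A"
  have m: "mt A x y \<in> car A" using c by simp
  show ?thesis
    using le_trans[OF c(3) m c(1)] le_trans[OF c(3) m c(2)] meet_glb[OF c] c meet_le1[OF c(1,2)] meet_le2[OF c(1,2)] by blast
qed
lemma meet_mono: "x \<in> car A \<Longrightarrow> y \<in> car A \<Longrightarrow> z \<in> car A \<Longrightarrow> w \<in> car A \<Longrightarrow> hle A x y \<Longrightarrow> hle A z w \<Longrightarrow> hle A (mt A x z) (mt A y w)"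
  using le_trans[of "mt A x z" x y] le_trans[of "mt A x z" z w] meet_glb[of y w "mt A x z"] by auto

end

locale fsl = msl A for A :: "('a, 'b) halg_scheme" +
  fixes S :: "'a set"
  assumes topm: "top_max A"
    and S_car: "S \<subseteq> car A" and tp_S: "tp A \<in> S"
    and S_mt: "x \<in> S \<Longrightarrow> y \<in> S \<Longrightarrow> mt A x y \<in> S"
begin

lemma inS[intro]: "x \<in> S \<Longrightarrow> x \<in> car A" using S_car by blast

definition filt :: "'a set \<Rightarrow> bool" where
  "filt Q \<longleftrightarrow> Q \<subseteq> S \<and> tp A \<in> Q \<and> (\<forall>x\<in>Q. \<forall>y\<in>Q. mt A x y \<in> Q)
     \<and> (\<forall>x\<in>Q. \<forall>y\<in>S. hle A x y \<longrightarrow> y \<in> Q)"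

definition maxf :: "'a \<Rightarrow> 'a set \<Rightarrow> bool" where
  "maxf a Q \<longleftrightarrow> filt Q \<and> a \<notin> Q \<and> (\<forall>Q'. filt Q' \<longrightarrow> Q \<subseteq> Q' \<longrightarrow> a \<notin> Q' \<longrightarrow> Q' = Q)"

definition genf :: "'a set \<Rightarrow> 'a \<Rightarrow> 'a set" where
  "genf Q b = {z \<in> S. \<exists>q\<in>Q. hle A (mt A q b) z}"

lemma filt_sub: "filt Q \<Longrightarrow> x \<in> Q \<Longrightarrow> x \<in> S" unfolding filt_def by blast
lemma filt_tp: "filt Q \<Longrightarrow> tp A \<in> Q" unfolding filt_def by blast
lemma filt_mt: "filt Q \<Longrightarrow> x \<in> Q \<Longrightarrow> y \<in> Q \<Longrightarrow> mt A x y \<in> Q" unfolding filt_def by blast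
lemma filt_up: "filt Q \<Longrightarrow> x \<in> Q \<Longrightarrow> y \<in> S \<Longrightarrow> hle A x y \<Longrightarrow> y \<in> Q" unfolding filt_def by blast

lemma le_tp: "x \<in> car A \<Longrightarrow> hle A x (tp A)" using topm unfolding top_max_def by blast

lemma genf_filt:
  assumes "filt Q" "b \<in> S" shows "filt (genf Q b)"
  unfolding filt_def genf_def
proof (intro conjI ballI impI)
  show "{z \<in> S. \<exists>q\<in>Q. hle A (mt A q b) z} \<subseteq> S" by blast
  show "tp A \<in> {z \<in> S. \<exists>q\<in>Q. hle A (mt A q b) z}"
  proof -
    have "hle A (mt A (tp A) b) (tp A)" using assms tp_S inS meet_le1 by blast
    then show ?thesis using assms tp_S filt_tp by blast
  qed
next
  fix x y assume x: "x \<in> {z \<in> S. \<exists>q\<in>Q. hle A (mt A q b) z}" and y: "y \<in> {z \<in> S. \<exists>q\<in>Q. hle A (mt A q b) z}"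
  then obtain q1 q2 where q: "q1 \<in> Q" "q2 \<in> Q" "hle A (mt A q1 b) x" "hle A (mt A q2 b) y" "x \<in> S" "y \<in> S" by blast
  have c: "q1 \<in> car A" "q2 \<in> car A" "b \<in> car A" "x \<in> car A" "y \<in> car A" using q assms filt_sub by auto
  have "hle A (mt A (mt A q1 q2) b) (mt A q1 b)"
    using c by (meson le_refl meet_le1 meet_mono mt_closed)
  moreover have "hle A (mt A (mt A q1 q2) b) (mt A q2 b)"
    using c by (meson le_refl meet_le2 meet_mono mt_closed)
  ultimately have "hle A (mt A (mt A q1 q2) b) (mt A x y)"
  proof -
    assume h1: "hle A (mt A (mt A q1 q2) b) (mt A q1 b)" and h2: "hle A (mt A (mt A q1 q2) b) (mt A q2 b)"
    have m: "mt A (mt A q1 q2) b \<in> car A" using c by simp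
    have "hle A (mt A (mt A q1 q2) b) x" using le_trans[OF m _ c(4) h1] q c by simp
    moreover have "hle A (mt A (mt A q1 q2) b) y" using le_trans[OF m _ c(5) h2] q c by simp
    ultimately show ?thesis using meet_glb[OF c(4,5) m] by blast
  qed
  then show "mt A x y \<in> {z \<in> S. \<exists>q\<in>Q. hle A (mt A q b) z}"
    using q assms S_mt filt_mt by blast
next
  fix x y assume x: "x \<in> {z \<in> S. \<exists>q\<in>Q. hle A (mt A q b) z}" and y: "y \<in> S" and le: "hle A x y"
  then obtain q where q: "q \<in> Q" "hle A (mt A q b) x" "x \<in> S" by blast
  have "hle A (mt A q b) y" using q y le assms filt_sub by (meson inS le_trans mt_closed)
  then show "y \<in> {z \<in> S. \<exists>q\<in>Q. hle A (mt A q b) z}" using q y by blast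
qed

lemma genf_sup: "filt Q \<Longrightarrow> b \<in> S \<Longrightarrow> Q \<subseteq> genf Q b"
proof
  fix x assume f: "filt Q" and b: "b \<in> S" and x: "x \<in> Q"
  have xc: "x \<in> S" using f x filt_sub by blast
  have "hle A (mt A x b) x" using xc b inS meet_le1 by blast
  then show "x \<in> genf Q b" unfolding genf_def using x xc by blast
qed
lemma genf_b: "filt Q \<Longrightarrow> b \<in> S \<Longrightarrow> b \<in> genf Q b"
proof -
  assume f: "filt Q" and b: "b \<in> S"
  have "hle A (mt A (tp A) b) b" using b tp_S inS meet_le2 by blast
  then show ?thesis unfolding genf_def using b f filt_tp by blast
qed

lemma principal_filt: "x \<in> S \<Longrightarrow> filt {z \<in> S. hle A x z}"
  unfolding filt_def
proof (intro conjI ballI impI)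
  assume x: "x \<in> S"
  show "tp A \<in> {z \<in> S. hle A x z}" using x tp_S le_tp inS by blast
  fix y z assume y: "y \<in> {z \<in> S. hle A x z}" and z: "z \<in> {z \<in> S. hle A x z}"
  then show "mt A y z \<in> {z \<in> S. hle A x z}" using x S_mt meet_glb inS by blast
next
  fix y z assume x: "x \<in> S" and y: "y \<in> {z \<in> S. hle A x z}" and z: "z \<in> S" "hle A y z"
  then show "z \<in> {z \<in> S. hle A x z}" using le_trans[of x y z] inS by blast
qed blast

lemma zorn_filt:
  assumes F: "filt F" and a: "a \<notin> F"
  shows "\<exists>Q. maxf a Q \<and> F \<subseteq> Q"
proof -
  let ?A = "{Q. filt Q \<and> F \<subseteq> Q \<and> a \<notin> Q}"
  have "\<forall>C\<in>chains ?A. \<exists>U\<in>?A. \<forall>X\<in>C. X \<subseteq> U"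
  proof
    fix C assume C: "C \<in> chains ?A"
    show "\<exists>U\<in>?A. \<forall>X\<in>C. X \<subseteq> U"
    proof (cases "C = {}")
      case True then show ?thesis using F a by blast
    next
      case False
      have sub: "C \<subseteq> ?A" and ch: "\<forall>X\<in>C. \<forall>Y\<in>C. X \<subseteq> Y \<or> Y \<subseteq> X"
        using C unfolding chains_def chain_subset_def by blast+
      have "filt (\<Union>C)" unfolding filt_def
      proof (intro conjI ballI impI)
        show "\<Union>C \<subseteq> S" using sub filt_sub by blast
        show "tp A \<in> \<Union>C" using False sub filt_tp by blast
      next
        fix x y assume "x \<in> \<Union>C" "y \<in> \<Union>C"
        then obtain X Y where "X \<in> C" "Y \<in> C" "x \<in> X" "y \<in> Y" by blast
        then show "mt A x y \<in> \<Union>C" using ch sub filt_mt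
          by (metis (no_types, lifting) UnionI mem_Collect_eq subsetD)
      next
        fix x y assume "x \<in> \<Union>C" "y \<in> S" "hle A x y"
        then show "y \<in> \<Union>C" using sub filt_up by blast
      qed
      then have "\<Union>C \<in> ?A" using False sub by blast
      then show ?thesis by blast
    qed
  qed
  from Zorn_Lemma2[OF this] obtain M where M: "M \<in> ?A" "\<forall>X\<in>?A. M \<subseteq> X \<longrightarrow> X = M" by blast
  then have "maxf a M" unfolding maxf_def by blast
  then show ?thesis using M by blast
qed

lemma filt_mt_iff: "filt Q \<Longrightarrow> x \<in> S \<Longrightarrow> y \<in> S \<Longrightarrow> mt A x y \<in> Q \<longleftrightarrow> x \<in> Q \<and> y \<in> Q"
proof -
  assume f: "filt Q" and x: "x \<in> S" and y: "y \<in> S"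
  have "hle A (mt A x y) x" "hle A (mt A x y) y" using x y inS by simp_all
  then show ?thesis using filt_up[OF f _ x] filt_up[OF f _ y] filt_mt[OF f] by blast
qed

lemma maxf_strict: "maxf a Q \<Longrightarrow> filt Q' \<Longrightarrow> Q \<subseteq> Q' \<Longrightarrow> Q' \<noteq> Q \<Longrightarrow> a \<in> Q'"
  unfolding maxf_def by blast

end

inductive_set genI :: "('a, 'b) halg_scheme \<Rightarrow> 'a set \<Rightarrow> 'a set" for A G where
  gI_g: "g \<in> G \<Longrightarrow> g \<in> genI A G"
| gI_tp: "tp A \<in> genI A G"
| gI_mt: "x \<in> genI A G \<Longrightarrow> y \<in> genI A G \<Longrightarrow> mt A x y \<in> genI A G"
| gI_im: "x \<in> genI A G \<Longrightarrow> y \<in> genI A G \<Longrightarrow> im A x y \<in> genI A G"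

locale isl = msl A for A :: "('a, 'b) halg_scheme" +
  assumes topm: "top_max A" and resid: "residuated A"
begin
lemma tp_car[simp]: "tp A \<in> car A" using topm unfolding top_max_def by blast
lemma im_closed[simp]: "x \<in> car A \<Longrightarrow> y \<in> car A \<Longrightarrow> im A x y \<in> car A"
  using resid unfolding residuated_def by blast
lemma res_iff: "a \<in> car A \<Longrightarrow> b \<in> car A \<Longrightarrow> c \<in> car A \<Longrightarrow> hle A (mt A c a) b \<longleftrightarrow> hle A c (im A a b)"
  using resid unfolding residuated_def by blast
lemma mp: "a \<in> car A \<Longrightarrow> b \<in> car A \<Longrightarrow> hle A (mt A a (im A a b)) b"
  by (metis im_closed le_refl mt_comm res_iff)
lemma le_imp: "a \<in> car A \<Longrightarrow> b \<in> car A \<Longrightarrow> hle A b (im A a b)"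
  by (metis meet_le1 res_iff)
end

locale isl_gen = isl A for A :: "('a, 'b) halg_scheme" +
  fixes G :: "'a set"
  assumes G_car: "G \<subseteq> car A" and G_fin: "finite G"
begin

lemma genI_car: "x \<in> genI A G \<Longrightarrow> x \<in> car A"
  by (induction rule: genI.induct) (use G_car in auto)

sublocale fsl A "genI A G"
  by unfold_locales (auto simp: topm genI_car intro: genI.intros)

abbreviation "SS \<equiv> genI A G"

lemma key: "a \<in> SS \<Longrightarrow> maxf a Q \<Longrightarrow> \<exists>g\<in>G. maxf g Q"
proof (induction arbitrary: Q rule: genI.induct)
  case (gI_g g) then show ?case by blast
next
  case gI_tp then show ?case unfolding maxf_def using filt_tp by blast
next
  case (gI_mt x y)
  have fQ: "filt Q" using gI_mt.prems unfolding maxf_def by blast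
  have xc: "x \<in> car A" "y \<in> car A" using gI_mt.hyps genI_car by auto
  have "x \<notin> Q \<or> y \<notin> Q" using gI_mt.prems fQ filt_mt unfolding maxf_def by blast
  then show ?case
  proof
    assume "x \<notin> Q"
    have "maxf x Q" unfolding maxf_def
    proof (intro conjI allI impI)
      fix Q' assume "filt Q'" "Q \<subseteq> Q'" "x \<notin> Q'"
      then have "mt A x y \<notin> Q'" using filt_up xc gI_mt.hyps by (meson meet_le1)
      then show "Q' = Q" using gI_mt.prems \<open>filt Q'\<close> \<open>Q \<subseteq> Q'\<close> unfolding maxf_def by blast
    qed (use fQ \<open>x \<notin> Q\<close> in auto)
    then show ?thesis using gI_mt.IH by blast
  next
    assume "y \<notin> Q"
    have "maxf y Q" unfolding maxf_def
    proof (intro conjI allI impI)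
      fix Q' assume "filt Q'" "Q \<subseteq> Q'" "y \<notin> Q'"
      then have "mt A x y \<notin> Q'" using filt_up xc gI_mt.hyps by (meson meet_le2)
      then show "Q' = Q" using gI_mt.prems \<open>filt Q'\<close> \<open>Q \<subseteq> Q'\<close> unfolding maxf_def by blast
    qed (use fQ \<open>y \<notin> Q\<close> in auto)
    then show ?thesis using gI_mt.IH by blast
  qed
next
  case (gI_im b c)
  have fQ: "filt Q" and aQ: "im A b c \<notin> Q" using gI_im.prems unfolding maxf_def by blast+
  have bc: "b \<in> car A" "c \<in> car A" using gI_im.hyps genI_car by auto
  have aS: "im A b c \<in> SS" using gI_im.hyps by (rule genI.gI_im)
  have bQ: "b \<in> Q"
  proof (rule ccontr)
    assume nb: "b \<notin> Q"
    have "genf Q b \<noteq> Q" using genf_b[OF fQ gI_im.hyps(1)] nb by blast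
    then have "im A b c \<in> genf Q b"
      using maxf_strict[OF gI_im.prems genf_filt[OF fQ gI_im.hyps(1)] genf_sup[OF fQ gI_im.hyps(1)]] by blast
    then obtain q where q: "q \<in> Q" "hle A (mt A q b) (im A b c)" unfolding genf_def by blast
    have qc: "q \<in> car A" using q fQ filt_sub by blast
    have "hle A (mt A (mt A q b) b) c" using q bc qc res_iff by auto
    then have "hle A (mt A q b) c" using bc qc by (simp add: mt_assoc)
    then have "hle A q (im A b c)" using bc qc res_iff by auto
    then have "im A b c \<in> Q" using filt_up[OF fQ q(1) aS] by blast
    then show False using aQ by blast
  qed
  have cQ: "c \<notin> Q" using aQ filt_up[OF fQ _ aS] le_imp bc by blast
  have "maxf c Q" unfolding maxf_def
  proof (intro conjI allI impI)
    fix Q' assume f': "filt Q'" "Q \<subseteq> Q'" "c \<notin> Q'"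
    show "Q' = Q"
    proof (rule ccontr)
      assume "Q' \<noteq> Q"
      then have "im A b c \<in> Q'" using maxf_strict[OF gI_im.prems f'(1,2)] by blast
      then have "mt A b (im A b c) \<in> Q'" using f' bQ filt_mt by blast
      then have "c \<in> Q'" using filt_up[OF f'(1) _ gI_im.hyps(2)] mp bc by blast
      then show False using f' by blast
    qed
  qed (use fQ cQ in auto)
  then show ?case using gI_im.IH by blast
qed

definition "PP = {Q. \<exists>g\<in>G. maxf g Q}"

lemma PP_filt: "P \<in> PP \<Longrightarrow> filt P" unfolding PP_def maxf_def by blast

lemma repr:
  assumes fP: "filt P" and x: "x \<in> SS" and y: "y \<in> SS" and n: "im A x y \<notin> P"
  shows "\<exists>Q\<in>PP. P \<subseteq> Q \<and> x \<in> Q \<and> y \<notin> Q"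
proof -
  have xyc: "x \<in> car A" "y \<in> car A" using x y genI_car by auto
  have "y \<notin> genf P x"
  proof
    assume "y \<in> genf P x"
    then obtain q where q: "q \<in> P" "hle A (mt A q x) y" unfolding genf_def by blast
    have "q \<in> car A" using q fP filt_sub genI_car by blast
    then have "hle A q (im A x y)" using q xyc res_iff by auto
    then show False using n filt_up[OF fP q(1)] x y by (blast intro: gI_im)
  qed
  from zorn_filt[OF genf_filt[OF fP x] this] obtain Q where Q: "maxf y Q" "genf P x \<subseteq> Q" by blast
  have "Q \<in> PP" using key[OF y Q(1)] unfolding PP_def by blast
  moreover have "P \<subseteq> Q" "x \<in> Q" using Q genf_sup[OF fP x] genf_b[OF fP x] by blast+
  ultimately show ?thesis using Q(1) unfolding maxf_def by blast
qed

lemma imp_mem: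
  assumes fP: "filt P" and x: "x \<in> SS" and y: "y \<in> SS"
  shows "im A x y \<in> P \<longleftrightarrow> (\<forall>Q\<in>PP. P \<subseteq> Q \<longrightarrow> x \<in> Q \<longrightarrow> y \<in> Q)"
proof
  assume i: "im A x y \<in> P"
  show "\<forall>Q\<in>PP. P \<subseteq> Q \<longrightarrow> x \<in> Q \<longrightarrow> y \<in> Q"
  proof (intro ballI impI)
    fix Q assume "Q \<in> PP" "P \<subseteq> Q" "x \<in> Q"
    then have fQ: "filt Q" and "mt A x (im A x y) \<in> Q" using PP_filt i filt_mt by blast+
    then show "y \<in> Q" using filt_up[OF fQ _ y] mp x y genI_car by blast
  qed
next
  assume "\<forall>Q\<in>PP. P \<subseteq> Q \<longrightarrow> x \<in> Q \<longrightarrow> y \<in> Q"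
  then show "im A x y \<in> P" using repr[OF fP x y] by blast
qed

lemma determ:
  assumes P: "P \<in> PP" and P': "P' \<in> PP" and tr: "P \<inter> G = P' \<inter> G"
    and su: "{Q\<in>PP. P \<subset> Q} = {Q\<in>PP. P' \<subset> Q}"
  shows "P = P'"
proof -
  have fP: "filt P" and fP': "filt P'" using P P' PP_filt by auto
  have "x \<in> SS \<Longrightarrow> (x \<in> P \<longleftrightarrow> x \<in> P')" for x
  proof (induction rule: genI.induct)
    case (gI_g g) then show ?case using tr by blast
  next
    case gI_tp then show ?case using fP fP' filt_tp by blast
  next
    case (gI_mt x y) then show ?case using filt_mt_iff[OF fP gI_mt.hyps] filt_mt_iff[OF fP' gI_mt.hyps] by blast
  next
    case (gI_im x y)
    have "im A x y \<in> P \<longleftrightarrow> (\<forall>Q\<in>PP. P \<subseteq> Q \<longrightarrow> x \<in> Q \<longrightarrow> y \<in> Q)" by (rule imp_mem[OF fP gI_im.hyps])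
    also have "\<dots> \<longleftrightarrow> (x \<in> P \<longrightarrow> y \<in> P) \<and> (\<forall>Q\<in>{Q\<in>PP. P \<subset> Q}. x \<in> Q \<longrightarrow> y \<in> Q)"
      using P by blast
    also have "\<dots> \<longleftrightarrow> (x \<in> P' \<longrightarrow> y \<in> P') \<and> (\<forall>Q\<in>{Q\<in>PP. P' \<subset> Q}. x \<in> Q \<longrightarrow> y \<in> Q)"
      using su gI_im.IH by simp
    also have "\<dots> \<longleftrightarrow> (\<forall>Q\<in>PP. P' \<subseteq> Q \<longrightarrow> x \<in> Q \<longrightarrow> y \<in> Q)" using P' by blast
    also have "\<dots> \<longleftrightarrow> im A x y \<in> P'" by (rule imp_mem[OF fP' gI_im.hyps, symmetric])
    finally show ?case .
  qed
  then show ?thesis using fP fP' filt_sub by blast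
qed

lemma strict_tr: "P \<in> PP \<Longrightarrow> filt Q \<Longrightarrow> P \<subset> Q \<Longrightarrow> P \<inter> G \<subset> Q \<inter> G"
  unfolding PP_def maxf_def by blast

lemma PP_fin: "finite PP"
proof -
  define PK where "PK k = {P\<in>PP. k \<le> card (P \<inter> G)}" for k
  have "finite (PK k)" for k
  proof (induction "card G + 1 - k" arbitrary: k)
    case 0
    have "card (P \<inter> G) \<le> card G" for P by (rule card_mono[OF G_fin]) auto
    have gt: "card G < k" using 0 by arith
    have "PK k = {}"
    proof (rule ccontr)
      assume "PK k \<noteq> {}"
      then obtain P where "k \<le> card (P \<inter> G)" unfolding PK_def by blast
      then show False using gt \<open>card (P \<inter> G) \<le> card G\<close> by simp
    qed
    then show ?case by simp
  next
    case (Suc n)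
    then have IH: "finite (PK (Suc k))" by simp
    let ?f = "\<lambda>P. (P \<inter> G, {Q\<in>PP. P \<subset> Q})"
    have "inj_on ?f {P\<in>PP. card (P \<inter> G) = k}"
      by (rule inj_onI) (use determ in auto)
    moreover have "?f ` {P\<in>PP. card (P \<inter> G) = k} \<subseteq> Pow G \<times> Pow (PK (Suc k))"
    proof
      fix z assume "z \<in> ?f ` {P\<in>PP. card (P \<inter> G) = k}"
      then obtain P where P: "P \<in> PP" "card (P \<inter> G) = k" "z = ?f P" by blast
      have "{Q\<in>PP. P \<subset> Q} \<subseteq> PK (Suc k)"
      proof
        fix Q assume Q: "Q \<in> {Q\<in>PP. P \<subset> Q}"
        have "filt Q" using Q PP_filt by blast
        then have "P \<inter> G \<subset> Q \<inter> G" using strict_tr[OF P(1)] Q by blast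
        then have "card (P \<inter> G) < card (Q \<inter> G)" by (intro psubset_card_mono) (use G_fin in auto)
        then show "Q \<in> PK (Suc k)" using Q P unfolding PK_def by auto
      qed
      then show "z \<in> Pow G \<times> Pow (PK (Suc k))" using P by auto
    qed
    ultimately have "finite {P\<in>PP. card (P \<inter> G) = k}"
      using IH G_fin by (meson finite_Pow_iff finite_SigmaI inj_on_finite)
    moreover have "PK k \<subseteq> PK (Suc k) \<union> {P\<in>PP. card (P \<inter> G) = k}" unfolding PK_def by auto
    ultimately show ?case using IH by (meson finite_UnI finite_subset)
  qed
  moreover have "PK 0 = PP" unfolding PK_def by simp
  ultimately show ?thesis by metis
qed

lemma sep: "x \<in> SS \<Longrightarrow> y \<in> SS \<Longrightarrow> \<not> hle A x y \<Longrightarrow> \<exists>Q\<in>PP. x \<in> Q \<and> y \<notin> Q"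
proof -
  assume x: "x \<in> SS" and y: "y \<in> SS" and n: "\<not> hle A x y"
  have f: "filt {z \<in> SS. hle A x z}" by (rule principal_filt[OF x])
  have "y \<notin> {z \<in> SS. hle A x z}" using n by blast
  from zorn_filt[OF f this] obtain Q where Q: "maxf y Q" "{z \<in> SS. hle A x z} \<subseteq> Q" by blast
  have "Q \<in> PP" using key[OF y Q(1)] unfolding PP_def by blast
  moreover have "x \<in> Q" using Q x genI_car by auto
  ultimately show ?thesis using Q(1) unfolding maxf_def by blast
qed

theorem SS_fin: "finite SS"
proof -
  let ?f = "\<lambda>x. {Q\<in>PP. x \<in> Q}"
  have "inj_on ?f SS"
  proof (rule inj_onI)
    fix x y assume x: "x \<in> SS" and y: "y \<in> SS" and e: "?f x = ?f y"
    have "hle A x y" using sep[OF x y] e by blast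
    moreover have "hle A y x" using sep[OF y x] e by blast
    ultimately show "x = y" using le_antisym x y genI_car by blast
  qed
  moreover have "?f ` SS \<subseteq> Pow PP" by blast
  ultimately show ?thesis using PP_fin by (meson finite_Pow_iff inj_on_finite)
qed

end

locale dlat = msl A for A :: "('a, 'b) halg_scheme" +
  assumes lat: "is_lattice A" and dist: "is_distributive A"
begin
lemma jn_closed[simp]: "x \<in> car A \<Longrightarrow> y \<in> car A \<Longrightarrow> jn A x y \<in> car A"
  using lat unfolding is_lattice_def by blast
lemma jn_assoc: "x \<in> car A \<Longrightarrow> y \<in> car A \<Longrightarrow> z \<in> car A \<Longrightarrow> jn A (jn A x y) z = jn A x (jn A y z)"
  using lat unfolding is_lattice_def by blast
lemma jn_comm: "x \<in> car A \<Longrightarrow> y \<in> car A \<Longrightarrow> jn A x y = jn A y x"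
  using lat unfolding is_lattice_def by blast
lemma absorb1: "x \<in> car A \<Longrightarrow> y \<in> car A \<Longrightarrow> mt A x (jn A x y) = x"
  using lat unfolding is_lattice_def by blast
lemma absorb2: "x \<in> car A \<Longrightarrow> y \<in> car A \<Longrightarrow> jn A x (mt A x y) = x"
  using lat unfolding is_lattice_def by blast
lemma distr: "x \<in> car A \<Longrightarrow> y \<in> car A \<Longrightarrow> z \<in> car A \<Longrightarrow> mt A x (jn A y z) = jn A (mt A x y) (mt A x z)"
  using dist unfolding is_distributive_def by blast
lemma jn_ub1: "x \<in> car A \<Longrightarrow> y \<in> car A \<Longrightarrow> hle A x (jn A x y)"
  unfolding hle_def by (rule absorb1)
lemma jn_ub2: "x \<in> car A \<Longrightarrow> y \<in> car A \<Longrightarrow> hle A y (jn A x y)"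
  using jn_ub1[of y x] jn_comm[of x y] by simp
lemma le_jn_iff: "x \<in> car A \<Longrightarrow> z \<in> car A \<Longrightarrow> hle A x z \<longleftrightarrow> jn A x z = z"
proof
  assume c: "x \<in> car A" "z \<in> car A" and h: "hle A x z"
  have "mt A x z = x" using h unfolding hle_def by simp
  then have "jn A x z = jn A (mt A z x) z" using mt_comm c by simp
  also have "\<dots> = z" using absorb2[of z x] jn_comm[of "mt A z x" z] c by simp
  finally show "jn A x z = z" .
next
  assume c: "x \<in> car A" "z \<in> car A" and h: "jn A x z = z"
  show "hle A x z" unfolding hle_def using absorb1[of x z] h c by simp
qed
lemma jn_lub: "x \<in> car A \<Longrightarrow> y \<in> car A \<Longrightarrow> z \<in> car A \<Longrightarrow> hle A x z \<Longrightarrow> hle A y z \<Longrightarrow> hle A (jn A x y) z"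
proof -
  assume c: "x \<in> car A" "y \<in> car A" "z \<in> car A" and h: "hle A x z" "hle A y z"
  have "jn A (jn A x y) z = jn A x (jn A y z)" using jn_assoc c by simp
  also have "\<dots> = z" using h le_jn_iff c by simp
  finally show ?thesis using le_jn_iff c by simp
qed
end

locale pdl = dlat A for A :: "('a, 'b) halg_scheme" +
  assumes botm: "bot_min A" and topm: "top_max A" and pc: "pseudocomplemented A"
begin
lemma bt_car[simp]: "bt A \<in> car A" using botm unfolding bot_min_def by blast
lemma bt_le: "x \<in> car A \<Longrightarrow> hle A (bt A) x" using botm unfolding bot_min_def by blast
lemma tp_car[simp]: "tp A \<in> car A" using topm unfolding top_max_def by blast
lemma ng_closed[simp]: "x \<in> car A \<Longrightarrow> ng A x \<in> car A" using pc unfolding pseudocomplemented_def by blast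
lemma pc_iff: "a \<in> car A \<Longrightarrow> c \<in> car A \<Longrightarrow> mt A c a = bt A \<longleftrightarrow> hle A c (ng A a)"
  using pc unfolding pseudocomplemented_def by blast
lemma le_bt: "x \<in> car A \<Longrightarrow> hle A x (bt A) \<Longrightarrow> x = bt A"
  using le_antisym bt_le by simp
lemma ng_meet: "x \<in> car A \<Longrightarrow> mt A (ng A x) x = bt A"
  using pc_iff[of x "ng A x"] by simp
end

inductive_set genP :: "('a, 'b) halg_scheme \<Rightarrow> 'a set \<Rightarrow> 'a set" for A G where
  gP_g: "g \<in> G \<Longrightarrow> g \<in> genP A G"
| gP_tp: "tp A \<in> genP A G"
| gP_bt: "bt A \<in> genP A G"
| gP_mt: "x \<in> genP A G \<Longrightarrow> y \<in> genP A G \<Longrightarrow> mt A x y \<in> genP A G"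
| gP_jn: "x \<in> genP A G \<Longrightarrow> y \<in> genP A G \<Longrightarrow> jn A x y \<in> genP A G"
| gP_ng: "x \<in> genP A G \<Longrightarrow> ng A x \<in> genP A G"

locale pdl_gen = pdl A for A :: "('a, 'b) halg_scheme" +
  fixes G :: "'a set"
  assumes G_car: "G \<subseteq> car A" and G_fin: "finite G"
begin

lemma genP_car: "x \<in> genP A G \<Longrightarrow> x \<in> car A"
  by (induction rule: genP.induct) (use G_car in auto)

sublocale fsl A "genP A G"
  by unfold_locales (auto simp: topm genP_car intro: genP.intros)

abbreviation "SS \<equiv> genP A G"

lemma prime:
  assumes M: "maxf a Q" and x: "x \<in> SS" and y: "y \<in> SS" and j: "jn A x y \<in> Q"
  shows "x \<in> Q \<or> y \<in> Q"
proof (rule ccontr)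
  assume n: "\<not> (x \<in> Q \<or> y \<in> Q)"
  have fQ: "filt Q" and aQ: "a \<notin> Q" using M unfolding maxf_def by blast+
  have "genf Q x \<noteq> Q" using genf_b[OF fQ x] n by blast
  then have "a \<in> genf Q x" using maxf_strict[OF M genf_filt[OF fQ x] genf_sup[OF fQ x]] by blast
  then obtain q1 where q1: "q1 \<in> Q" "hle A (mt A q1 x) a" and aS: "a \<in> SS" unfolding genf_def by blast
  have "genf Q y \<noteq> Q" using genf_b[OF fQ y] n by blast
  then have "a \<in> genf Q y" using maxf_strict[OF M genf_filt[OF fQ y] genf_sup[OF fQ y]] by blast
  then obtain q2 where q2: "q2 \<in> Q" "hle A (mt A q2 y) a" unfolding genf_def by blast
  have c: "q1 \<in> car A" "q2 \<in> car A" "x \<in> car A" "y \<in> car A" "a \<in> car A"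
    using q1 q2 fQ filt_sub x y aS genP_car by blast+
  define q where "q = mt A q1 q2"
  have qQ: "q \<in> Q" unfolding q_def using filt_mt[OF fQ q1(1) q2(1)] .
  have qc: "q \<in> car A" unfolding q_def using c by simp
  have "hle A (mt A q x) (mt A q1 x)" unfolding q_def using c meet_mono by simp
  then have h1: "hle A (mt A q x) a" using le_trans[OF _ _ c(5) _ q1(2)] c qc by simp
  have "hle A (mt A q y) (mt A q2 y)" unfolding q_def using c meet_mono by simp
  then have h2: "hle A (mt A q y) a" using le_trans[OF _ _ c(5) _ q2(2)] c qc by simp
  have "mt A q (jn A x y) = jn A (mt A q x) (mt A q y)" using distr c qc by simp
  then have "hle A (mt A q (jn A x y)) a" using jn_lub h1 h2 c qc by simp
  moreover have "mt A q (jn A x y) \<in> Q" using filt_mt[OF fQ qQ j] .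
  ultimately have "a \<in> Q" using filt_up[OF fQ _ aS] by blast
  then show False using aQ by blast
qed

lemma jn_mem:
  assumes M: "maxf a Q" and x: "x \<in> SS" and y: "y \<in> SS"
  shows "jn A x y \<in> Q \<longleftrightarrow> x \<in> Q \<or> y \<in> Q"
proof -
  have fQ: "filt Q" using M unfolding maxf_def by blast
  have j: "jn A x y \<in> SS" using x y by (rule gP_jn)
  have "hle A x (jn A x y)" "hle A y (jn A x y)" using x y genP_car jn_ub1 jn_ub2 by auto
  then show ?thesis using prime[OF M x y] filt_up[OF fQ _ j] by blast
qed

lemma ng_max:
  assumes M: "maxf (bt A) M" and z: "z \<in> SS"
  shows "ng A z \<in> M \<longleftrightarrow> z \<notin> M"
proof
  assume "ng A z \<in> M"
  have fM: "filt M" and bM: "bt A \<notin> M" using M unfolding maxf_def by blast+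
  show "z \<notin> M"
  proof
    assume "z \<in> M"
    then have "mt A (ng A z) z \<in> M" using filt_mt[OF fM \<open>ng A z \<in> M\<close>] by blast
    then show False using ng_meet z genP_car bM by simp
  qed
next
  assume zn: "z \<notin> M"
  have fM: "filt M" using M unfolding maxf_def by blast
  have "genf M z \<noteq> M" using genf_b[OF fM z] zn by blast
  then have "bt A \<in> genf M z" using maxf_strict[OF M genf_filt[OF fM z] genf_sup[OF fM z]] by blast
  then obtain q where q: "q \<in> M" "hle A (mt A q z) (bt A)" unfolding genf_def by blast
  have qc: "q \<in> car A" using q fM filt_sub genP_car by blast
  have "mt A q z = bt A" using le_bt q qc z genP_car by simp
  then have "hle A q (ng A z)" using pc_iff qc z genP_car by simp
  then show "ng A z \<in> M" using filt_up[OF fM q(1)] z by (blast intro: gP_ng)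
qed

lemma ng_mem:
  assumes fP: "filt P" and x: "x \<in> SS"
  shows "ng A x \<in> P \<longleftrightarrow> (\<forall>M. maxf (bt A) M \<longrightarrow> P \<subseteq> M \<longrightarrow> x \<notin> M)"
proof
  assume "ng A x \<in> P"
  then show "\<forall>M. maxf (bt A) M \<longrightarrow> P \<subseteq> M \<longrightarrow> x \<notin> M" using ng_max x by blast
next
  assume H: "\<forall>M. maxf (bt A) M \<longrightarrow> P \<subseteq> M \<longrightarrow> x \<notin> M"
  show "ng A x \<in> P"
  proof (rule ccontr)
    assume nP: "ng A x \<notin> P"
    have "bt A \<notin> genf P x"
    proof
      assume "bt A \<in> genf P x"
      then obtain q where q: "q \<in> P" "hle A (mt A q x) (bt A)" unfolding genf_def by blast
      have qc: "q \<in> car A" using q fP filt_sub genP_car by blast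
      have "mt A q x = bt A" using le_bt q qc x genP_car by simp
      then have "hle A q (ng A x)" using pc_iff qc x genP_car by simp
      then show False using filt_up[OF fP q(1)] x nP by (blast intro: gP_ng)
    qed
    from zorn_filt[OF genf_filt[OF fP x] this] obtain M where "maxf (bt A) M" "genf P x \<subseteq> M" by blast
    then show False using H genf_sup[OF fP x] genf_b[OF fP x] by blast
  qed
qed

lemma M_determ:
  assumes M: "maxf (bt A) M" and M': "maxf (bt A) M'" and tr: "M \<inter> G = M' \<inter> G"
  shows "x \<in> SS \<Longrightarrow> (x \<in> M \<longleftrightarrow> x \<in> M')"
proof (induction rule: genP.induct)
  case (gP_g g) then show ?case using tr by blast
next
  case gP_tp then show ?case using M M' filt_tp unfolding maxf_def by blast
next
  case gP_bt then show ?case using M M' unfolding maxf_def by blast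
next
  case (gP_mt x y)
  have fM: "filt M" and fM': "filt M'" using M M' unfolding maxf_def by blast+
  show ?case using gP_mt.IH filt_mt_iff[OF fM gP_mt.hyps] filt_mt_iff[OF fM' gP_mt.hyps] by blast
next
  case (gP_jn x y)
  have fM: "filt M" and fM': "filt M'" using M M' unfolding maxf_def by blast+
  note jn_mem[OF M gP_jn.hyps] jn_mem[OF M' gP_jn.hyps]
  then show ?case using gP_jn.IH by blast
next
  case (gP_ng x)
  then show ?case using ng_max[OF M gP_ng.hyps] ng_max[OF M' gP_ng.hyps] by blast
qed

definition "PP = {P. \<exists>a\<in>SS. maxf a P}"
definition "sig P = (P \<inter> G, {M \<inter> G | M. maxf (bt A) M \<and> P \<subseteq> M})"

lemma P_determ:
  assumes P: "P \<in> PP" and P': "P' \<in> PP" and sg: "sig P = sig P'"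
  shows "x \<in> SS \<Longrightarrow> (x \<in> P \<longleftrightarrow> x \<in> P')"
proof (induction rule: genP.induct)
  case (gP_g g) then show ?case using sg unfolding sig_def by blast
next
  case gP_tp
  have fM: "filt P" and fM': "filt P'" using P P' unfolding maxf_def PP_def by blast+
  then show ?case using filt_tp by blast
next
  case gP_bt
  have "bt A \<notin> P"
  proof
    assume "bt A \<in> P"
    obtain a where a: "a \<in> SS" "maxf a P" using P unfolding PP_def by blast
    then have f: "filt P" and na: "a \<notin> P" unfolding maxf_def by blast+
    have "hle A (bt A) a" using bt_le a genP_car by blast
    then show False using filt_up[OF f \<open>bt A \<in> P\<close> a(1)] na by blast
  qed
  moreover have "bt A \<notin> P'"
  proof
    assume "bt A \<in> P'"
    obtain a where a: "a \<in> SS" "maxf a P'" using P' unfolding PP_def by blast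
    then have f: "filt P'" and na: "a \<notin> P'" unfolding maxf_def by blast+
    have "hle A (bt A) a" using bt_le a genP_car by blast
    then show False using filt_up[OF f \<open>bt A \<in> P'\<close> a(1)] na by blast
  qed
  ultimately show ?case by blast
next
  case (gP_mt x y)
  have fM: "filt P" and fM': "filt P'" using P P' unfolding maxf_def PP_def by blast+
  show ?case using gP_mt.IH filt_mt_iff[OF fM gP_mt.hyps] filt_mt_iff[OF fM' gP_mt.hyps] by blast
next
  case (gP_jn x y)
  have fM: "filt P" and fM': "filt P'" using P P' unfolding maxf_def PP_def by blast+
  obtain a where a: "maxf a P" using P unfolding PP_def by blast
  obtain a' where a': "maxf a' P'" using P' unfolding PP_def by blast
  note jn_mem[OF a gP_jn.hyps] jn_mem[OF a' gP_jn.hyps]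
  then show ?case using gP_jn.IH by blast
next
  case (gP_ng x)
  have fM: "filt P" and fM': "filt P'" using P P' unfolding maxf_def PP_def by blast+
  have T: "{M \<inter> G | M. maxf (bt A) M \<and> P \<subseteq> M} = {M \<inter> G | M. maxf (bt A) M \<and> P' \<subseteq> M}"
    using sg unfolding sig_def by simp
  have "ng A x \<in> P \<longleftrightarrow> (\<forall>M. maxf (bt A) M \<longrightarrow> P \<subseteq> M \<longrightarrow> x \<notin> M)" by (rule ng_mem[OF fM gP_ng.hyps])
  also have "\<dots> \<longleftrightarrow> (\<forall>M. maxf (bt A) M \<longrightarrow> P' \<subseteq> M \<longrightarrow> x \<notin> M)"
  proof
    assume H: "\<forall>M. maxf (bt A) M \<longrightarrow> P \<subseteq> M \<longrightarrow> x \<notin> M"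
    show "\<forall>M. maxf (bt A) M \<longrightarrow> P' \<subseteq> M \<longrightarrow> x \<notin> M"
    proof (intro allI impI)
      fix M assume "maxf (bt A) M" "P' \<subseteq> M"
      then have "M \<inter> G \<in> {M \<inter> G | M. maxf (bt A) M \<and> P \<subseteq> M}" using T by blast
      then obtain M0 where "maxf (bt A) M0" "P \<subseteq> M0" "M0 \<inter> G = M \<inter> G" by blast
      then show "x \<notin> M" using H M_determ[OF \<open>maxf (bt A) M0\<close> \<open>maxf (bt A) M\<close> _ gP_ng.hyps] by blast
    qed
  next
    assume H: "\<forall>M. maxf (bt A) M \<longrightarrow> P' \<subseteq> M \<longrightarrow> x \<notin> M"
    show "\<forall>M. maxf (bt A) M \<longrightarrow> P \<subseteq> M \<longrightarrow> x \<notin> M"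
    proof (intro allI impI)
      fix M assume "maxf (bt A) M" "P \<subseteq> M"
      then have "M \<inter> G \<in> {M \<inter> G | M. maxf (bt A) M \<and> P' \<subseteq> M}" using T by blast
      then obtain M0 where "maxf (bt A) M0" "P' \<subseteq> M0" "M0 \<inter> G = M \<inter> G" by blast
      then show "x \<notin> M" using H M_determ[OF \<open>maxf (bt A) M0\<close> \<open>maxf (bt A) M\<close> _ gP_ng.hyps] by blast
    qed
  qed
  also have "\<dots> \<longleftrightarrow> ng A x \<in> P'" by (rule ng_mem[OF fM' gP_ng.hyps, symmetric])
  finally show ?case .
qed

lemma sep: "x \<in> SS \<Longrightarrow> y \<in> SS \<Longrightarrow> \<not> hle A x y \<Longrightarrow> \<exists>Q\<in>PP. x \<in> Q \<and> y \<notin> Q"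
proof -
  assume x: "x \<in> SS" and y: "y \<in> SS" and n: "\<not> hle A x y"
  have f: "filt {z \<in> SS. hle A x z}" by (rule principal_filt[OF x])
  have "y \<notin> {z \<in> SS. hle A x z}" using n by blast
  from zorn_filt[OF f this] obtain Q where Q: "maxf y Q" "{z \<in> SS. hle A x z} \<subseteq> Q" by blast
  have "Q \<in> PP" using Q(1) y unfolding PP_def by blast
  moreover have "x \<in> Q" using Q x genP_car by auto
  ultimately show ?thesis using Q(1) unfolding maxf_def by blast
qed

theorem SS_fin: "finite SS"
proof -
  let ?f = "\<lambda>x. sig ` {Q\<in>PP. x \<in> Q}"
  have key: False if x: "x \<in> SS" and y: "y \<in> SS" and e: "?f x = ?f y" and n: "\<not> hle A x y" for x y
  proof -
    obtain P where P: "P \<in> PP" "x \<in> P" "y \<notin> P" using sep[OF x y n] by blast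
    then have "P \<in> {Q\<in>PP. x \<in> Q}" by blast
    then have "sig P \<in> ?f x" by (rule imageI)
    then have "sig P \<in> ?f y" using e by simp
    then obtain P' where "P' \<in> PP" "y \<in> P'" "sig P' = sig P" by (auto elim!: imageE)
    then show False using P_determ[OF P(1) \<open>P' \<in> PP\<close> _ y] P by simp
  qed
  have "inj_on ?f SS"
  proof (rule inj_onI)
    fix x y assume x: "x \<in> SS" and y: "y \<in> SS" and e: "?f x = ?f y"
    have "hle A x y" using key[OF x y e] by blast
    moreover have "hle A y x" using key[OF y x e[symmetric]] by blast
    ultimately show "x = y" using le_antisym x y genP_car by blast
  qed
  moreover have "?f ` SS \<subseteq> Pow (Pow G \<times> Pow (Pow G))" unfolding sig_def by auto
  ultimately show ?thesis using G_fin by (meson finite_Pow_iff finite_SigmaI inj_on_finite)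
qed

end

lemma fin_min:
  assumes fin: "finite T" and ne: "T \<noteq> {}"
    and cl: "\<forall>a\<in>T. \<forall>b\<in>T. f a b \<in> T \<and> R (f a b) a \<and> R (f a b) b"
    and tr: "\<forall>x\<in>T. \<forall>y\<in>T. \<forall>z\<in>T. R x y \<longrightarrow> R y z \<longrightarrow> R x z"
    and rf: "\<forall>x\<in>T. R x x"
  shows "\<exists>m\<in>T. \<forall>z\<in>T. R m z"
proof -
  have "T' \<subseteq> T \<Longrightarrow> \<exists>m\<in>T. \<forall>z\<in>T'. R m z" if "finite T'" "T' \<noteq> {}" for T'
    using that
  proof (induction T' rule: finite_ne_induct)
    case (singleton x) then show ?case using rf by blast
  next
    case (insert x F)
    then obtain m where m: "m \<in> T" "\<forall>z\<in>F. R m z" by blast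
    have x: "x \<in> T" using insert by blast
    have "f x m \<in> T" "R (f x m) x" "R (f x m) m" using cl x m by blast+
    then show ?case using m tr x insert.prems by blast
  qed
  then show ?thesis using fin ne by blast
qed

context fsl
begin

definition "jS x y = (SOME z. z \<in> S \<and> hle A x z \<and> hle A y z \<and> (\<forall>w\<in>S. hle A x w \<longrightarrow> hle A y w \<longrightarrow> hle A z w))"
definition "bS = (SOME z. z \<in> S \<and> (\<forall>w\<in>S. hle A z w))"
definition "iS x y = (SOME z. z \<in> S \<and> (\<forall>c\<in>S. hle A (mt A c x) y \<longleftrightarrow> hle A c z))"
definition "CS = \<lparr>car = S, mt = mt A, jn = jS, im = iS, ng = ng A, bt = bS, tp = tp A\<rparr>"

lemma CS_simps[simp]: "car CS = S" "mt CS = mt A" "jn CS = jS" "im CS = iS" "bt CS = bS" "tp CS = tp A"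
  by (simp_all add: CS_def)

lemma hle_CS[simp]: "hle CS = hle A" by (simp add: hle_def[abs_def])

context
  assumes finS: "finite S"
begin

lemma jS_ex: "x \<in> S \<Longrightarrow> y \<in> S \<Longrightarrow> \<exists>z. z \<in> S \<and> hle A x z \<and> hle A y z \<and> (\<forall>w\<in>S. hle A x w \<longrightarrow> hle A y w \<longrightarrow> hle A z w)"
proof -
  assume x: "x \<in> S" and y: "y \<in> S"
  let ?T = "{z \<in> S. hle A x z \<and> hle A y z}"
  have "tp A \<in> ?T" using tp_S x y le_tp inS by blast
  then have "\<exists>m\<in>?T. \<forall>z\<in>?T. hle A m z"
    apply (intro fin_min[where f = "mt A"])
    using finS apply simp
      apply blast
    subgoal using x y S_mt meet_glb inS by simp
    subgoal using le_trans inS by blast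
    subgoal using inS by simp
    done
  then show ?thesis by blast
qed

lemma jS: "x \<in> S \<Longrightarrow> y \<in> S \<Longrightarrow> jS x y \<in> S \<and> hle A x (jS x y) \<and> hle A y (jS x y) \<and> (\<forall>w\<in>S. hle A x w \<longrightarrow> hle A y w \<longrightarrow> hle A (jS x y) w)"
  unfolding jS_def by (rule someI_ex, rule jS_ex)

lemma bS: "bS \<in> S \<and> (\<forall>w\<in>S. hle A bS w)"
proof -
  have "\<exists>m\<in>S. \<forall>z\<in>S. hle A m z"
    apply (intro fin_min[where f = "mt A"])
    using finS apply simp
    using tp_S apply blast
    subgoal using S_mt inS by simp
    subgoal using le_trans inS by blast
    subgoal using inS by simp
    done
  then have "\<exists>m. m \<in> S \<and> (\<forall>z\<in>S. hle A m z)" by blast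
  then show ?thesis unfolding bS_def by (rule someI_ex)
qed

lemma jS_unique: "x \<in> S \<Longrightarrow> y \<in> S \<Longrightarrow> z \<in> S \<Longrightarrow> hle A x z \<Longrightarrow> hle A y z \<Longrightarrow> (\<forall>w\<in>S. hle A x w \<longrightarrow> hle A y w \<longrightarrow> hle A z w) \<Longrightarrow> jS x y = z"
  using jS le_antisym inS by meson

lemma lattice_CS: "is_lattice CS"
proof -
  have ms: "meet_semilattice CS" unfolding meet_semilattice_def
    using S_mt mt_assoc mt_comm inS by simp
  have cl: "\<forall>x\<in>S. \<forall>y\<in>S. jS x y \<in> S" using jS by blast
  have as: "jS (jS x y) z = jS x (jS y z)" if "x \<in> S" "y \<in> S" "z \<in> S" for x y z
  proof -
    have a: "jS x y \<in> S" "hle A x (jS x y)" "hle A y (jS x y)" using jS that by auto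
    have b: "jS y z \<in> S" "hle A y (jS y z)" "hle A z (jS y z)" using jS that by auto
    have c: "jS (jS x y) z \<in> S" "hle A (jS x y) (jS (jS x y) z)" "hle A z (jS (jS x y) z)" using jS that a by auto
    have d: "jS x (jS y z) \<in> S" "hle A x (jS x (jS y z))" "hle A (jS y z) (jS x (jS y z))" using jS that b by auto
    show ?thesis
    proof (rule jS_unique)
      show "jS x (jS y z) \<in> S" using d by simp
      have "hle A y (jS x (jS y z))" using le_trans[of y "jS y z" "jS x (jS y z)"] b d that inS by blast
      then show "hle A (jS x y) (jS x (jS y z))" using jS[OF that(1,2)] d by blast
      show "hle A z (jS x (jS y z))" using le_trans[of z "jS y z" "jS x (jS y z)"] b d that inS by blast
      show "\<forall>w\<in>S. hle A (jS x y) w \<longrightarrow> hle A z w \<longrightarrow> hle A (jS x (jS y z)) w"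
      proof (intro ballI impI)
        fix w assume w: "w \<in> S" "hle A (jS x y) w" "hle A z w"
        have "hle A x w" "hle A y w" using le_trans[of x "jS x y" w] le_trans[of y "jS x y" w] a w that inS by blast+
        then have "hle A (jS y z) w" using jS[OF that(2,3)] w by blast
        then show "hle A (jS x (jS y z)) w" using jS[OF that(1) b(1)] w \<open>hle A x w\<close> by blast
      qed
    qed (use that a in auto)
  qed
  have co: "jS x y = jS y x" if "x \<in> S" "y \<in> S" for x y
  proof -
    have p: "jS y x \<in> S \<and> hle A y (jS y x) \<and> hle A x (jS y x) \<and> (\<forall>w\<in>S. hle A y w \<longrightarrow> hle A x w \<longrightarrow> hle A (jS y x) w)"
      using jS[OF that(2,1)] .
    show ?thesis by (rule jS_unique[OF that]) (use p in blast)+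
  qed
  have id: "jS x x = x" if "x \<in> S" for x
    using jS_unique[OF that that that] inS that by simp
  have ab1: "mt A x (jS x y) = x" if "x \<in> S" "y \<in> S" for x y
    using jS[OF that] unfolding hle_def by blast
  have ab2: "jS x (mt A x y) = x" if "x \<in> S" "y \<in> S" for x y
    using jS_unique[OF that(1) S_mt[OF that] that(1)] inS that by simp
  show ?thesis unfolding is_lattice_def using ms cl as co id ab1 ab2 by simp
qed

lemma HA_CS:
  assumes ex: "\<forall>x\<in>S. \<forall>y\<in>S. \<exists>z\<in>S. \<forall>c\<in>S. hle A (mt A c x) y \<longleftrightarrow> hle A c z"
  shows "in_var HA CS"
proof -
  have iS: "iS x y \<in> S \<and> (\<forall>c\<in>S. hle A (mt A c x) y \<longleftrightarrow> hle A c (iS x y))" if "x \<in> S" "y \<in> S" for x y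
  proof -
    have "\<exists>z. z \<in> S \<and> (\<forall>c\<in>S. hle A (mt A c x) y \<longleftrightarrow> hle A c z)" using ex that by blast
    then show ?thesis unfolding iS_def by (rule someI_ex)
  qed
  have "top_max CS" unfolding top_max_def using tp_S le_tp inS by simp
  moreover have "residuated CS" unfolding residuated_def using iS by simp
  moreover have "bot_min CS" unfolding bot_min_def using bS by simp
  ultimately show ?thesis using lattice_CS by simp
qed

lemma iS_unique:
  assumes ex: "\<forall>x\<in>S. \<forall>y\<in>S. \<exists>z\<in>S. \<forall>c\<in>S. hle A (mt A c x) y \<longleftrightarrow> hle A c z"
    and x: "x \<in> S" and y: "y \<in> S" and z: "z \<in> S" and H: "\<forall>c\<in>S. hle A (mt A c x) y \<longleftrightarrow> hle A c z"
  shows "iS x y = z"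
proof -
  have iS: "iS x y \<in> S \<and> (\<forall>c\<in>S. hle A (mt A c x) y \<longleftrightarrow> hle A c (iS x y))"
  proof -
    have "\<exists>z. z \<in> S \<and> (\<forall>c\<in>S. hle A (mt A c x) y \<longleftrightarrow> hle A c z)" using ex x y by blast
    then show ?thesis unfolding iS_def by (rule someI_ex)
  qed
  have "hle A (mt A z x) y" using H z inS by simp
  then have "hle A z (iS x y)" using iS z by blast
  moreover have "hle A (iS x y) z" using iS H inS by simp
  ultimately show ?thesis using le_antisym iS z inS by blast
qed

lemma bS_unique: "b \<in> S \<Longrightarrow> \<forall>w\<in>S. hle A b w \<Longrightarrow> bS = b"
  using bS le_antisym inS by blast

end
end

definition good :: "lang \<Rightarrow> ('a, 'b) halg_scheme \<Rightarrow> 'a set \<Rightarrow> 'a halg \<Rightarrow> bool" where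
  "good K A F C \<longleftrightarrow> in_var HA C \<and> F \<subseteq> car C \<and> car C \<subseteq> car A \<and>
     (\<forall>x\<in>car C. \<forall>y\<in>car C. mt C x y = mt A x y \<and> (has_join K \<longrightarrow> jn C x y = jn A x y)
        \<and> (has_imp K \<longrightarrow> im C x y = im A x y)) \<and>
     (has_neg K \<longrightarrow> (\<forall>x\<in>car C. im C x (bt C) = ng A x)) \<and>
     (has_bot K \<longrightarrow> bt C = bt A) \<and> tp C = tp A"

context isl_gen
begin

lemma res_ex: "\<forall>x\<in>SS. \<forall>y\<in>SS. \<exists>z\<in>SS. \<forall>c\<in>SS. hle A (mt A c x) y \<longleftrightarrow> hle A c z"
proof (intro ballI)
  fix x y assume x: "x \<in> SS" and y: "y \<in> SS"
  have xc: "x \<in> car A" and yc: "y \<in> car A" using x y genI_car by auto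
  have "\<forall>c\<in>SS. hle A (mt A c x) y \<longleftrightarrow> hle A c (im A x y)"
  proof
    fix c assume "c \<in> SS"
    then have "c \<in> car A" using genI_car by blast
    then show "hle A (mt A c x) y \<longleftrightarrow> hle A c (im A x y)" by (rule res_iff[OF xc yc])
  qed
  then show "\<exists>z\<in>SS. \<forall>c\<in>SS. hle A (mt A c x) y \<longleftrightarrow> hle A c z" by (rule bexI[OF _ gI_im[OF x y]])
qed

lemma isl_CS:
  "in_var HA CS \<and> G \<subseteq> car CS \<and> car CS \<subseteq> car A \<and>
   (\<forall>x\<in>car CS. \<forall>y\<in>car CS. mt CS x y = mt A x y \<and> im CS x y = im A x y) \<and> tp CS = tp A"
proof -
  have "in_var HA CS" using HA_CS[OF SS_fin res_ex] .
  moreover have "G \<subseteq> car CS" using gI_g by auto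
  moreover have "car CS \<subseteq> car A" using genI_car by auto
  moreover have "\<forall>x\<in>car CS. \<forall>y\<in>car CS. im CS x y = im A x y"
  proof (intro ballI)
    fix x y assume x: "x \<in> car CS" and y: "y \<in> car CS"
    have "iS x y = im A x y"
      apply (rule iS_unique[OF SS_fin res_ex])
      using x y gI_im res_iff genI_car by auto
    then show "im CS x y = im A x y" by simp
  qed
  ultimately show ?thesis by simp
qed

lemma isl_CS_bt: "bot_min A \<Longrightarrow> bt A \<in> G \<Longrightarrow> bt CS = bt A"
proof -
  assume b: "bot_min A" and g: "bt A \<in> G"
  have "bt A \<in> SS" using g by (rule gI_g)
  moreover have "\<forall>w\<in>SS. hle A (bt A) w" using b genI_car unfolding bot_min_def by blast
  ultimately have "bS = bt A" by (rule bS_unique[OF SS_fin])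
  then show ?thesis by simp
qed

end

context pdl_gen
begin

lemma res_ex: "\<forall>x\<in>SS. \<forall>y\<in>SS. \<exists>z\<in>SS. \<forall>c\<in>SS. hle A (mt A c x) y \<longleftrightarrow> hle A c z"
proof (intro ballI)
  fix x y assume x: "x \<in> SS" and y: "y \<in> SS"
  have xc: "x \<in> car A" and yc: "y \<in> car A" using x y genP_car by auto
  let ?T = "{c \<in> SS. hle A (mt A c x) y}"
  have yT: "y \<in> ?T" using y xc yc meet_le1 by simp
  have "\<exists>m\<in>?T. \<forall>z\<in>?T. hle A z m"
  proof (rule fin_min[where f = "jn A" and R = "\<lambda>a b. hle A b a"])
    show "finite ?T" using SS_fin by simp
    show "?T \<noteq> {}" using yT by blast
    show "\<forall>a\<in>?T. \<forall>b\<in>?T. jn A a b \<in> ?T \<and> hle A a (jn A a b) \<and> hle A b (jn A a b)"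
    proof (intro ballI conjI)
      fix a b assume a: "a \<in> ?T" and b: "b \<in> ?T"
      have ac: "a \<in> car A" and bc: "b \<in> car A" using a b genP_car by auto
      have "mt A (jn A a b) x = jn A (mt A a x) (mt A b x)"
        using distr[OF xc ac bc] mt_comm[of "jn A a b" x] mt_comm[of x a] mt_comm[of x b] ac bc xc by simp
      moreover have "hle A (jn A (mt A a x) (mt A b x)) y"
      proof (rule jn_lub)
        show "hle A (mt A a x) y" "hle A (mt A b x) y" using a b by blast+
      qed (use ac bc xc yc in simp_all)
      ultimately have "hle A (mt A (jn A a b) x) y" by simp
      moreover have "jn A a b \<in> SS" using a b by (intro gP_jn) auto
      ultimately show "jn A a b \<in> ?T" by simp
      show "hle A a (jn A a b)" "hle A b (jn A a b)" using jn_ub1 jn_ub2 ac bc by auto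
    qed
    show "\<forall>x\<in>?T. \<forall>y\<in>?T. \<forall>z\<in>?T. hle A y x \<longrightarrow> hle A z y \<longrightarrow> hle A z x"
      using le_trans genP_car by blast
    show "\<forall>x\<in>?T. hle A x x" using genP_car by simp
  qed
  then obtain m where m: "m \<in> ?T" "\<forall>z\<in>?T. hle A z m" by blast
  have mc: "m \<in> car A" using m genP_car by blast
  have "\<forall>c\<in>SS. hle A (mt A c x) y \<longleftrightarrow> hle A c m"
  proof (intro ballI iffI)
    fix c assume "c \<in> SS" "hle A (mt A c x) y" then show "hle A c m" using m by blast
  next
    fix c assume c: "c \<in> SS" and h: "hle A c m"
    have cc: "c \<in> car A" using c genP_car by blast
    have "hle A (mt A c x) (mt A m x)" using meet_mono[OF cc mc xc xc h] xc by simp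
    moreover have "hle A (mt A m x) y" using m(1) by blast
    ultimately show "hle A (mt A c x) y" using le_trans[of "mt A c x" "mt A m x" y] cc mc xc yc by simp
  qed
  then show "\<exists>z\<in>SS. \<forall>c\<in>SS. hle A (mt A c x) y \<longleftrightarrow> hle A c z" using m by blast
qed

lemma good_pdl: "good PDL A G CS"
proof -
  have ha: "in_var HA CS" using HA_CS[OF SS_fin res_ex] .
  have "bt A \<in> SS" by (rule gP_bt)
  moreover have "\<forall>w\<in>SS. hle A (bt A) w" using genP_car bt_le by blast
  ultimately have bt: "bS = bt A" by (rule bS_unique[OF SS_fin])
  have jn: "jS x y = jn A x y" if "x \<in> SS" "y \<in> SS" for x y
  proof -
    have c: "x \<in> car A" "y \<in> car A" using that genP_car by auto
    show ?thesis
      by (rule jS_unique[OF SS_fin that]) (use c that gP_jn jn_ub1 jn_ub2 jn_lub genP_car in auto)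
  qed
  have ng: "iS x (bt A) = ng A x" if x: "x \<in> SS" for x
  proof (rule iS_unique[OF SS_fin res_ex x gP_bt gP_ng[OF x]])
    have xc: "x \<in> car A" using x genP_car by blast
    show "\<forall>c\<in>SS. hle A (mt A c x) (bt A) = hle A c (ng A x)"
    proof
      fix c assume "c \<in> SS"
      then have cc: "c \<in> car A" using genP_car by blast
      have "hle A (mt A c x) (bt A) \<longleftrightarrow> mt A c x = bt A"
        using le_bt bt_le cc xc by (metis bt_car mt_closed)
      then show "hle A (mt A c x) (bt A) = hle A c (ng A x)" using pc_iff cc xc by simp
    qed
  qed
  show ?thesis unfolding good_def using ha bt jn ng gP_g genP_car by auto
qed

end

lemma lower_bound:
  assumes "meet_semilattice A" "top_max A" "finite F" "F \<subseteq> car A"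
  shows "\<exists>m\<in>car A. \<forall>x\<in>F. hle A m x"
  using assms(3,4)
proof (induction F rule: finite_induct)
  case empty then show ?case using assms(2) unfolding top_max_def by blast
next
  case (insert x F)
  interpret msl A by unfold_locales (rule assms(1))
  obtain m where m: "m \<in> car A" "\<forall>y\<in>F. hle A m y" using insert by blast
  have x: "x \<in> car A" using insert by blast
  have "\<forall>y\<in>insert x F. hle A (mt A x m) y"
  proof
    fix y assume "y \<in> insert x F"
    then show "hle A (mt A x m) y"
    proof
      assume "y = x" then show ?thesis using x m by simp
    next
      assume y: "y \<in> F"
      then have "y \<in> car A" using insert by blast
      then show ?thesis using le_trans[of "mt A x m" m y] m x y by simp
    qed
  qed
  then show ?case using x m by blast
qed

lemma lattice_sub:
  assumes lt: "is_lattice A" and e: "car C \<subseteq> car A" "mt C = mt A" "jn C = jn A"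
    and cl: "\<forall>x\<in>car C. \<forall>y\<in>car C. mt A x y \<in> car C" "\<forall>x\<in>car C. \<forall>y\<in>car C. jn A x y \<in> car C"
  shows "is_lattice C"
proof -
  have L: "\<forall>x\<in>car A. \<forall>y\<in>car A. \<forall>z\<in>car A. mt A (mt A x y) z = mt A x (mt A y z)"
     "\<forall>x\<in>car A. \<forall>y\<in>car A. mt A x y = mt A y x" "\<forall>x\<in>car A. mt A x x = x"
     "\<forall>x\<in>car A. \<forall>y\<in>car A. \<forall>z\<in>car A. jn A (jn A x y) z = jn A x (jn A y z)"
     "\<forall>x\<in>car A. \<forall>y\<in>car A. jn A x y = jn A y x" "\<forall>x\<in>car A. jn A x x = x"
     "\<forall>x\<in>car A. \<forall>y\<in>car A. mt A x (jn A x y) = x" "\<forall>x\<in>car A. \<forall>y\<in>car A. jn A x (mt A x y) = x"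
    using lt unfolding is_lattice_def meet_semilattice_def by blast+
  show ?thesis
    unfolding is_lattice_def meet_semilattice_def e(2,3)
    apply (intro conjI)
    using cl apply blast
    using L(1) e(1) apply blast
    using L(2) e(1) apply blast
    using L(3) e(1) apply blast
    using cl apply blast
    using L(4) e(1) apply blast
    using L(5) e(1) apply blast
    using L(6) e(1) apply blast
    using L(7) e(1) apply blast
    using L(8) e(1) apply blast
    done
qed

lemma good_IL:
  fixes A :: "'a halg"
  assumes A: "in_var IL A" and fin: "finite F" and F: "F \<subseteq> car A"
  shows "\<exists>C. good IL A F C"
proof -
  have ms: "meet_semilattice A" and tm: "top_max A" and rs: "residuated A" and lt: "is_lattice A"
    using A by (auto simp: is_lattice_def)
  interpret isl A by unfold_locales (use ms tm rs in auto)
  obtain m where m: "m \<in> car A" "\<forall>x\<in>F. hle A m x" using lower_bound[OF ms tm fin F] by blast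
  define C where "C = A\<lparr>car := {x \<in> car A. hle A m x}, bt := m\<rparr>"
  have Cs[simp]: "car C = {x \<in> car A. hle A m x}" "mt C = mt A" "jn C = jn A" "im C = im A" "tp C = tp A" "bt C = m"
    unfolding C_def by simp_all
  have hC[simp]: "hle C = hle A" by (simp add: hle_def[abs_def])
  have jc: "\<forall>x\<in>car A. \<forall>y\<in>car A. jn A x y \<in> car A" and ju: "\<forall>x\<in>car A. \<forall>y\<in>car A. hle A x (jn A x y)"
    using lt unfolding is_lattice_def hle_def by blast+
  have cm: "hle A m (mt A x y)" if "x \<in> car C" "y \<in> car C" for x y using that m meet_glb by simp
  have cj: "hle A m (jn A x y)" if "x \<in> car C" "y \<in> car C" for x y
    using that m le_trans[of m x "jn A x y"] jc ju by simp
  have ci: "hle A m (im A x y)" if "x \<in> car C" "y \<in> car C" for x y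
    using that m le_trans[of m y "im A x y"] le_imp by simp
  have "is_lattice C"
    by (rule lattice_sub[OF lt]) (use cm cj jc in auto)
  moreover have "top_max C" using tm m unfolding top_max_def by simp
  moreover have "residuated C" using rs ci unfolding residuated_def by simp
  moreover have "bot_min C" unfolding bot_min_def using m by simp
  ultimately have "in_var HA C" by simp
  then have "good IL A F C" unfolding good_def using F m by auto
  then show ?thesis by blast
qed

lemma good_exists:
  fixes A :: "'a halg"
  assumes A: "in_var K A" and fin: "finite F" and F: "F \<subseteq> car A"
  shows "\<exists>C. good K A F C"
proof (cases K)
  case ISL
  interpret isl_gen A F by unfold_locales (use A ISL fin F in auto)
  have "good ISL A F CS" using isl_CS unfolding good_def by auto
  then show ?thesis using ISL by blast
next
  case bISL
  have "bot_min A" using A bISL by simp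
  then have bt: "bt A \<in> car A" unfolding bot_min_def by blast
  interpret isl_gen A "insert (bt A) F" by unfold_locales (use A bISL fin F bt in auto)
  have "good bISL A F CS" using isl_CS isl_CS_bt A bISL unfolding good_def by auto
  then show ?thesis using bISL by blast
next
  case PDL
  interpret pdl_gen A F by unfold_locales (use A PDL fin F in \<open>auto simp: is_lattice_def\<close>)
  show ?thesis using good_pdl PDL by blast
next
  case IL
  then show ?thesis using good_IL A fin F by blast
next
  case HA
  have "good HA A F A" unfolding good_def using A HA F by auto
  then show ?thesis using HA by blast
qed

definition ultra :: "'i set set \<Rightarrow> bool" where
  "ultra U \<longleftrightarrow> UNIV \<in> U \<and> {} \<notin> U \<and> (\<forall>X\<in>U. \<forall>Y\<in>U. X \<inter> Y \<in> U) \<and> (\<forall>X\<in>U. \<forall>Y. X \<subseteq> Y \<longrightarrow> Y \<in> U)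
     \<and> (\<forall>X. X \<in> U \<or> - X \<in> U)"

definition pfilt :: "'i set set \<Rightarrow> bool" where
  "pfilt F \<longleftrightarrow> UNIV \<in> F \<and> {} \<notin> F \<and> (\<forall>X\<in>F. \<forall>Y\<in>F. X \<inter> Y \<in> F) \<and> (\<forall>X\<in>F. \<forall>Y. X \<subseteq> Y \<longrightarrow> Y \<in> F)"

lemma ultra_exists:
  fixes B :: "'i set set"
  assumes fip: "\<forall>T. finite T \<longrightarrow> T \<subseteq> B \<longrightarrow> \<Inter>T \<noteq> {}"
  shows "\<exists>U. ultra U \<and> B \<subseteq> U"
proof -
  define F0 where "F0 = {X. \<exists>T. finite T \<and> T \<subseteq> B \<and> \<Inter>T \<subseteq> X}"
  have pf0: "pfilt F0" unfolding pfilt_def F0_def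
  proof (intro conjI ballI allI impI)
    show "UNIV \<in> {X. \<exists>T. finite T \<and> T \<subseteq> B \<and> \<Inter>T \<subseteq> X}" by blast
    show "{} \<notin> {X. \<exists>T. finite T \<and> T \<subseteq> B \<and> \<Inter>T \<subseteq> X}" using fip by blast
  next
    fix X Y assume "X \<in> {X. \<exists>T. finite T \<and> T \<subseteq> B \<and> \<Inter>T \<subseteq> X}" "Y \<in> {X. \<exists>T. finite T \<and> T \<subseteq> B \<and> \<Inter>T \<subseteq> X}"
    then obtain T1 T2 where "finite T1" "T1 \<subseteq> B" "\<Inter>T1 \<subseteq> X" "finite T2" "T2 \<subseteq> B" "\<Inter>T2 \<subseteq> Y" by blast
    then have "finite (T1 \<union> T2) \<and> T1 \<union> T2 \<subseteq> B \<and> \<Inter>(T1 \<union> T2) \<subseteq> X \<inter> Y" by blast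
    then show "X \<inter> Y \<in> {X. \<exists>T. finite T \<and> T \<subseteq> B \<and> \<Inter>T \<subseteq> X}" by blast
  next
    fix X Y assume "X \<in> {X. \<exists>T. finite T \<and> T \<subseteq> B \<and> \<Inter>T \<subseteq> X}" "X \<subseteq> Y"
    then show "Y \<in> {X. \<exists>T. finite T \<and> T \<subseteq> B \<and> \<Inter>T \<subseteq> X}" by blast
  qed
  have BF0: "B \<subseteq> F0" unfolding F0_def
  proof
    fix X assume "X \<in> B"
    then have "finite {X} \<and> {X} \<subseteq> B \<and> \<Inter>{X} \<subseteq> X" by simp
    then show "X \<in> {X. \<exists>T. finite T \<and> T \<subseteq> B \<and> \<Inter>T \<subseteq> X}" by blast
  qed
  let ?A = "{F. pfilt F \<and> F0 \<subseteq> F}"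
  have "\<forall>C\<in>chains ?A. \<exists>U\<in>?A. \<forall>X\<in>C. X \<subseteq> U"
  proof
    fix C assume C: "C \<in> chains ?A"
    show "\<exists>U\<in>?A. \<forall>X\<in>C. X \<subseteq> U"
    proof (cases "C = {}")
      case True then show ?thesis using pf0 by blast
    next
      case False
      have sub: "C \<subseteq> ?A" and ch: "\<forall>X\<in>C. \<forall>Y\<in>C. X \<subseteq> Y \<or> Y \<subseteq> X"
        using C unfolding chains_def chain_subset_def by blast+
      have "pfilt (\<Union>C)" unfolding pfilt_def
      proof (intro conjI ballI allI impI)
        show "UNIV \<in> \<Union>C" using False sub unfolding pfilt_def by blast
        show "{} \<notin> \<Union>C" using sub unfolding pfilt_def by blast
      next
        fix X Y assume "X \<in> \<Union>C" "Y \<in> \<Union>C"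
        then obtain F1 F2 where F: "F1 \<in> C" "F2 \<in> C" "X \<in> F1" "Y \<in> F2" by blast
        then have "F1 \<subseteq> F2 \<or> F2 \<subseteq> F1" using ch by blast
        then show "X \<inter> Y \<in> \<Union>C"
        proof
          assume "F1 \<subseteq> F2"
          then have "X \<inter> Y \<in> F2" using F sub unfolding pfilt_def by blast
          then show ?thesis using F by blast
        next
          assume "F2 \<subseteq> F1"
          then have "X \<inter> Y \<in> F1" using F sub unfolding pfilt_def by blast
          then show ?thesis using F by blast
        qed
      next
        fix X Y assume "X \<in> \<Union>C" "X \<subseteq> Y"
        then show "Y \<in> \<Union>C" using sub unfolding pfilt_def by blast
      qed
      then have "\<Union>C \<in> ?A" using False sub by blast
      then show ?thesis by blast
    qed
  qed
  from Zorn_Lemma2[OF this] obtain M where M: "M \<in> ?A" "\<forall>X\<in>?A. M \<subseteq> X \<longrightarrow> X = M" by blast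
  have pM: "pfilt M" using M by blast
  have "\<forall>X. X \<in> M \<or> - X \<in> M"
  proof (rule ccontr)
    assume "\<not> (\<forall>X. X \<in> M \<or> - X \<in> M)"
    then obtain X where X: "X \<notin> M" "- X \<notin> M" by blast
    define F' where "F' = {Y. \<exists>Z\<in>M. Z \<inter> X \<subseteq> Y}"
    have "pfilt F'" unfolding pfilt_def F'_def
    proof (intro conjI ballI allI impI)
      show "UNIV \<in> {Y. \<exists>Z\<in>M. Z \<inter> X \<subseteq> Y}" using pM unfolding pfilt_def by blast
      show "{} \<notin> {Y. \<exists>Z\<in>M. Z \<inter> X \<subseteq> Y}"
      proof
        assume "{} \<in> {Y. \<exists>Z\<in>M. Z \<inter> X \<subseteq> Y}"
        then obtain Z where "Z \<in> M" "Z \<subseteq> - X" by blast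
        then show False using pM X unfolding pfilt_def by blast
      qed
    next
      fix Y1 Y2 assume "Y1 \<in> {Y. \<exists>Z\<in>M. Z \<inter> X \<subseteq> Y}" "Y2 \<in> {Y. \<exists>Z\<in>M. Z \<inter> X \<subseteq> Y}"
      then obtain Z1 Z2 where Z: "Z1 \<in> M" "Z2 \<in> M" "Z1 \<inter> X \<subseteq> Y1" "Z2 \<inter> X \<subseteq> Y2" by blast
      have "Z1 \<inter> Z2 \<in> M" using pM Z(1,2) unfolding pfilt_def by blast
      moreover have "(Z1 \<inter> Z2) \<inter> X \<subseteq> Y1 \<inter> Y2" using Z(3,4) by blast
      ultimately show "Y1 \<inter> Y2 \<in> {Y. \<exists>Z\<in>M. Z \<inter> X \<subseteq> Y}" by blast
    next
      fix Y1 Y2 assume "Y1 \<in> {Y. \<exists>Z\<in>M. Z \<inter> X \<subseteq> Y}" "Y1 \<subseteq> Y2"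
      then show "Y2 \<in> {Y. \<exists>Z\<in>M. Z \<inter> X \<subseteq> Y}" by blast
    qed
    moreover have "M \<subseteq> F'" unfolding F'_def by blast
    ultimately have "F' = M" using M by blast
    moreover have "X \<in> F'" unfolding F'_def using pM unfolding pfilt_def by blast
    ultimately show False using X by blast
  qed
  then have "ultra M" using pM unfolding ultra_def pfilt_def by blast
  then show ?thesis using M BF0 by blast
qed

definition eqU :: "'i set set \<Rightarrow> ('i \<Rightarrow> 'a) \<Rightarrow> ('i \<Rightarrow> 'a) \<Rightarrow> bool" where
  "eqU U f g \<longleftrightarrow> {i. f i = g i} \<in> U"
definition repU :: "'i set set \<Rightarrow> ('i \<Rightarrow> 'a) \<Rightarrow> ('i \<Rightarrow> 'a)" where
  "repU U f = (SOME g. eqU U g f)"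

definition UP :: "'i set set \<Rightarrow> ('i \<Rightarrow> 'a halg) \<Rightarrow> ('i \<Rightarrow> 'a) halg" where
  "UP U Cf = \<lparr>car = {repU U f | f. {i. f i \<in> car (Cf i)} \<in> U},
    mt = \<lambda>u v. repU U (\<lambda>i. mt (Cf i) (u i) (v i)),
    jn = \<lambda>u v. repU U (\<lambda>i. jn (Cf i) (u i) (v i)),
    im = \<lambda>u v. repU U (\<lambda>i. im (Cf i) (u i) (v i)),
    ng = \<lambda>u. repU U (\<lambda>i. ng (Cf i) (u i)),
    bt = repU U (\<lambda>i. bt (Cf i)), tp = repU U (\<lambda>i. tp (Cf i))\<rparr>"

lemma UP_simps[simp]:
  "car (UP U Cf) = {repU U f | f. {i. f i \<in> car (Cf i)} \<in> U}"
  "mt (UP U Cf) u v = repU U (\<lambda>i. mt (Cf i) (u i) (v i))"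
  "jn (UP U Cf) u v = repU U (\<lambda>i. jn (Cf i) (u i) (v i))"
  "im (UP U Cf) u v = repU U (\<lambda>i. im (Cf i) (u i) (v i))"
  "ng (UP U Cf) u = repU U (\<lambda>i. ng (Cf i) (u i))"
  "bt (UP U Cf) = repU U (\<lambda>i. bt (Cf i))"
  "tp (UP U Cf) = repU U (\<lambda>i. tp (Cf i))"
  by (simp_all add: UP_def)

locale ultraf =
  fixes U :: "'i set set"
  assumes ult: "ultra U"
begin

lemma U_univ[simp]: "UNIV \<in> U" using ult unfolding ultra_def by blast
lemma U_empty[simp]: "{} \<notin> U" using ult unfolding ultra_def by blast
lemma U_int: "X \<in> U \<Longrightarrow> Y \<in> U \<Longrightarrow> X \<inter> Y \<in> U" using ult unfolding ultra_def by blast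
lemma U_up: "X \<in> U \<Longrightarrow> X \<subseteq> Y \<Longrightarrow> Y \<in> U" using ult unfolding ultra_def by blast
lemma U_compl: "- X \<in> U \<longleftrightarrow> X \<notin> U"
proof
  assume "- X \<in> U"
  then show "X \<notin> U" using U_int[of X "- X"] by auto
next
  assume "X \<notin> U" then show "- X \<in> U" using ult unfolding ultra_def by blast
qed
lemma U_int_iff: "X \<inter> Y \<in> U \<longleftrightarrow> X \<in> U \<and> Y \<in> U"
  using U_int U_up by blast
lemma U_un_iff: "X \<union> Y \<in> U \<longleftrightarrow> X \<in> U \<or> Y \<in> U"
proof
  assume H: "X \<union> Y \<in> U"
  show "X \<in> U \<or> Y \<in> U"
  proof (rule ccontr)
    assume "\<not> (X \<in> U \<or> Y \<in> U)"
    then have "- X \<inter> - Y \<in> U" using U_compl U_int by blast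
    then have "(X \<union> Y) \<inter> (- X \<inter> - Y) \<in> U" using H U_int by blast
    moreover have "(X \<union> Y) \<inter> (- X \<inter> - Y) = {}" by blast
    ultimately show False by simp
  qed
next
  assume "X \<in> U \<or> Y \<in> U" then show "X \<union> Y \<in> U" using U_up by blast
qed

lemma eq_refl[simp]: "eqU U f f" unfolding eqU_def by simp
lemma eq_sym: "eqU U f g \<Longrightarrow> eqU U g f" unfolding eqU_def by (simp add: eq_commute)
lemma eq_trans: "eqU U f g \<Longrightarrow> eqU U g h \<Longrightarrow> eqU U f h"
  unfolding eqU_def proof -
  assume a: "{i. f i = g i} \<in> U" and b: "{i. g i = h i} \<in> U"
  show "{i. f i = h i} \<in> U" by (rule U_up[OF U_int[OF a b]]) auto
qed
lemma eq_sub: "X \<in> U \<Longrightarrow> (\<And>i. i \<in> X \<Longrightarrow> f i = g i) \<Longrightarrow> eqU U f g"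
  unfolding eqU_def by (rule U_up) auto

lemma rep_eq: "eqU U (repU U f) f"
  unfolding repU_def by (rule someI[of _ f]) simp
lemma rep_cong: "eqU U f g \<Longrightarrow> repU U f = repU U g"
proof -
  assume e: "eqU U f g"
  have "(\<lambda>h. eqU U h f) = (\<lambda>h. eqU U h g)"
    using e eq_trans eq_sym by blast
  then show ?thesis unfolding repU_def by simp
qed
lemma rep_iff: "repU U f = repU U g \<longleftrightarrow> eqU U f g"
proof
  assume "repU U f = repU U g"
  then show "eqU U f g" using rep_eq[of f] rep_eq[of g] eq_sym eq_trans by metis
qed (rule rep_cong)
lemma rep_rep: "repU U (repU U f) = repU U f"
  by (rule rep_cong[OF rep_eq])
lemma range_eq: "u \<in> range (repU U) \<Longrightarrow> v \<in> range (repU U) \<Longrightarrow> u = v \<longleftrightarrow> eqU U u v"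
  using rep_rep rep_iff by (metis f_inv_into_f)

lemma eq_op1: "eqU U f f' \<Longrightarrow> eqU U (\<lambda>i. h i (f i)) (\<lambda>i. h i (f' i))"
  unfolding eqU_def by (rule U_up) auto
lemma eq_op2: "eqU U f f' \<Longrightarrow> eqU U g g' \<Longrightarrow> eqU U (\<lambda>i. h i (f i) (g i)) (\<lambda>i. h i (f' i) (g' i))"
  unfolding eqU_def proof -
  assume a: "{i. f i = f' i} \<in> U" and b: "{i. g i = g' i} \<in> U"
  show "{i. h i (f i) (g i) = h i (f' i) (g' i)} \<in> U" by (rule U_up[OF U_int[OF a b]]) auto
qed

lemma los_eval:
  assumes "\<forall>n. eqU U (\<sigma> n) (\<rho> n)"
  shows "eqU U (eval (UP U Cf) \<sigma> t) (\<lambda>i. eval (Cf i) (\<lambda>n. \<rho> n i) t)"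
proof (induction t)
  case (V n) then show ?case using assms by simp
next
  case (TMt s t) then show ?case using eq_trans[OF rep_eq eq_op2] by simp
next
  case (TJn s t) then show ?case using eq_trans[OF rep_eq eq_op2] by simp
next
  case (TIm s t) then show ?case using eq_trans[OF rep_eq eq_op2] by simp
next
  case (TNg s) then show ?case using eq_trans[OF rep_eq eq_op1] by simp
next
  case TBt then show ?case using rep_eq by simp
next
  case TTp then show ?case using rep_eq by simp
qed

lemma eval_range: "\<forall>n. \<sigma> n \<in> range (repU U) \<Longrightarrow> eval (UP U Cf) \<sigma> t \<in> range (repU U)"
  by (cases t) auto

lemma los_holds:
  assumes r: "\<forall>n. \<sigma> n \<in> range (repU U)" and e: "\<forall>n. eqU U (\<sigma> n) (\<rho> n)"
  shows "holds (UP U Cf) \<sigma> p \<longleftrightarrow> {i. holds (Cf i) (\<lambda>n. \<rho> n i) p} \<in> U"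
proof (induction p)
  case (FEq s t)
  have "holds (UP U Cf) \<sigma> (FEq s t) \<longleftrightarrow> eqU U (eval (UP U Cf) \<sigma> s) (eval (UP U Cf) \<sigma> t)"
    using range_eq[OF eval_range[OF r] eval_range[OF r]] by simp
  also have "\<dots> \<longleftrightarrow> eqU U (\<lambda>i. eval (Cf i) (\<lambda>n. \<rho> n i) s) (\<lambda>i. eval (Cf i) (\<lambda>n. \<rho> n i) t)"
    using los_eval[OF e, of Cf s] los_eval[OF e, of Cf t] eq_trans eq_sym by blast
  finally show ?case unfolding eqU_def by simp
next
  case (FNot p)
  have "{i. holds (Cf i) (\<lambda>n. \<rho> n i) (FNot p)} = - {i. holds (Cf i) (\<lambda>n. \<rho> n i) p}" by auto
  then show ?case using FNot U_compl by simp
next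
  case (FAnd p q)
  have "{i. holds (Cf i) (\<lambda>n. \<rho> n i) (FAnd p q)} = {i. holds (Cf i) (\<lambda>n. \<rho> n i) p} \<inter> {i. holds (Cf i) (\<lambda>n. \<rho> n i) q}" by auto
  then show ?case using FAnd U_int_iff by simp
next
  case (FOr p q)
  have "{i. holds (Cf i) (\<lambda>n. \<rho> n i) (FOr p q)} = {i. holds (Cf i) (\<lambda>n. \<rho> n i) p} \<union> {i. holds (Cf i) (\<lambda>n. \<rho> n i) q}" by auto
  then show ?case using FOr U_un_iff by simp
qed

lemma car_range: "u \<in> car (UP U Cf) \<Longrightarrow> u \<in> range (repU U)" by auto

lemma car_ae: "u \<in> car (UP U Cf) \<Longrightarrow> {i. u i \<in> car (Cf i)} \<in> U"
proof -
  assume "u \<in> car (UP U Cf)"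
  then obtain f where f: "u = repU U f" "{i. f i \<in> car (Cf i)} \<in> U" by auto
  have "eqU U u f" using f rep_eq by simp
  then show ?thesis unfolding eqU_def using f U_int U_up by (smt (verit, del_insts) Int_iff mem_Collect_eq subsetI)
qed

lemma in_car: "{i. f i \<in> car (Cf i)} \<in> U \<Longrightarrow> repU U f \<in> car (UP U Cf)" by auto

lemma univ_transfer:
  assumes tp: "\<forall>i. tp (Cf i) \<in> car (Cf i)" and H: "\<forall>i. univ_true (Cf i) p"
  shows "univ_true (UP U Cf) p"
  unfolding univ_true_def
proof (intro allI impI)
  fix \<sigma> :: "nat \<Rightarrow> 'i \<Rightarrow> 'a" assume s: "\<forall>n. \<sigma> n \<in> car (UP U Cf)"
  define \<rho> where "\<rho> (n::nat) i = (if \<sigma> n i \<in> car (Cf i) then \<sigma> n i else tp (Cf i))" for n i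
  have e: "\<forall>n. eqU U (\<sigma> n) (\<rho> n)"
  proof
    fix n show "eqU U (\<sigma> n) (\<rho> n)" by (rule eq_sub[OF car_ae[OF s[rule_format, of n]]]) (simp add: \<rho>_def)
  qed
  have "\<forall>i. holds (Cf i) (\<lambda>n. \<rho> n i) p" using H tp unfolding univ_true_def \<rho>_def by simp
  then have "{i. holds (Cf i) (\<lambda>n. \<rho> n i) p} \<in> U" by simp
  then show "holds (UP U Cf) \<sigma> p" using los_holds[OF _ e] s car_range by blast
qed

end

definition le_f :: "trm \<Rightarrow> trm \<Rightarrow> fm" where "le_f s t = FEq (TMt s t) s"

definition pHA :: fm where
  "pHA = (let x = V 0; y = V 1; z = V 2 in
     FAnd (FEq (TMt (TMt x y) z) (TMt x (TMt y z)))
    (FAnd (FEq (TMt x y) (TMt y x))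
    (FAnd (FEq (TMt x x) x)
    (FAnd (FEq (TJn (TJn x y) z) (TJn x (TJn y z)))
    (FAnd (FEq (TJn x y) (TJn y x))
    (FAnd (FEq (TJn x x) x)
    (FAnd (FEq (TMt x (TJn x y)) x)
    (FAnd (FEq (TJn x (TMt x y)) x)
    (FAnd (le_f x TTp)
    (FAnd (le_f TBt x)
    (FOr (FAnd (le_f (TMt z x) y) (le_f z (TIm x y)))
         (FAnd (FNot (le_f (TMt z x) y)) (FNot (le_f z (TIm x y)))))))))))))))"

lemma pHA_holds: "holds C \<sigma> pHA \<longleftrightarrow>
   (let x = \<sigma> 0; y = \<sigma> 1; z = \<sigma> 2 in
    mt C (mt C x y) z = mt C x (mt C y z) \<and> mt C x y = mt C y x \<and> mt C x x = x \<and>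
    jn C (jn C x y) z = jn C x (jn C y z) \<and> jn C x y = jn C y x \<and> jn C x x = x \<and>
    mt C x (jn C x y) = x \<and> jn C x (mt C x y) = x \<and> mt C x (tp C) = x \<and> mt C (bt C) x = bt C \<and>
    (mt C (mt C z x) y = mt C z x \<longleftrightarrow> mt C z (im C x y) = z))"
  unfolding pHA_def le_f_def Let_def by auto

definition clos :: "'a halg \<Rightarrow> bool" where
  "clos C \<longleftrightarrow> (\<forall>x\<in>car C. \<forall>y\<in>car C. mt C x y \<in> car C \<and> jn C x y \<in> car C \<and> im C x y \<in> car C)
     \<and> tp C \<in> car C \<and> bt C \<in> car C"

lemma HA_clos: "in_var HA C \<Longrightarrow> clos C"
  unfolding clos_def by (auto simp: is_lattice_def meet_semilattice_def residuated_def top_max_def bot_min_def)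

lemma HA_facts:
  fixes C :: "'a halg"
  assumes "in_var HA C"
  shows "\<forall>x\<in>car C. \<forall>y\<in>car C. \<forall>z\<in>car C. mt C (mt C x y) z = mt C x (mt C y z)"
    and "\<forall>x\<in>car C. \<forall>y\<in>car C. mt C x y = mt C y x"
    and "\<forall>x\<in>car C. mt C x x = x"
    and "\<forall>x\<in>car C. \<forall>y\<in>car C. \<forall>z\<in>car C. jn C (jn C x y) z = jn C x (jn C y z)"
    and "\<forall>x\<in>car C. \<forall>y\<in>car C. jn C x y = jn C y x"
    and "\<forall>x\<in>car C. jn C x x = x"
    and "\<forall>x\<in>car C. \<forall>y\<in>car C. mt C x (jn C x y) = x"
    and "\<forall>x\<in>car C. \<forall>y\<in>car C. jn C x (mt C x y) = x"
    and "\<forall>x\<in>car C. mt C x (tp C) = x"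
    and "\<forall>x\<in>car C. mt C (bt C) x = bt C"
    and "\<forall>a\<in>car C. \<forall>b\<in>car C. \<forall>c\<in>car C. mt C (mt C c a) b = mt C c a \<longleftrightarrow> mt C c (im C a b) = c"
proof -
    have a: "is_lattice C" "top_max C" "residuated C" "bot_min C" using assms by simp_all
    note b = a[unfolded is_lattice_def meet_semilattice_def top_max_def bot_min_def residuated_def hle_def]
    show "\<forall>x\<in>car C. \<forall>y\<in>car C. \<forall>z\<in>car C. mt C (mt C x y) z = mt C x (mt C y z)" using b(1) by blast
    show "\<forall>x\<in>car C. \<forall>y\<in>car C. mt C x y = mt C y x" using b(1) by blast
    show "\<forall>x\<in>car C. mt C x x = x" using b(1) by blast
    show "\<forall>x\<in>car C. \<forall>y\<in>car C. \<forall>z\<in>car C. jn C (jn C x y) z = jn C x (jn C y z)" using b(1) by blast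
    show "\<forall>x\<in>car C. \<forall>y\<in>car C. jn C x y = jn C y x" using b(1) by blast
    show "\<forall>x\<in>car C. jn C x x = x" using b(1) by blast
    show "\<forall>x\<in>car C. \<forall>y\<in>car C. mt C x (jn C x y) = x" using b(1) by blast
    show "\<forall>x\<in>car C. \<forall>y\<in>car C. jn C x (mt C x y) = x" using b(1) by blast
    show "\<forall>x\<in>car C. mt C x (tp C) = x" using b(2) by blast
    show "\<forall>x\<in>car C. mt C (bt C) x = bt C" using b(4) by blast
    show "\<forall>a\<in>car C. \<forall>b\<in>car C. \<forall>c\<in>car C. mt C (mt C c a) b = mt C c a \<longleftrightarrow> mt C c (im C a b) = c" using b(3) by blast
qed

lemma HA_univ: fixes C :: "'a halg" assumes "in_var HA C" shows "univ_true C pHA"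
  unfolding univ_true_def
proof (intro allI impI)
  fix \<sigma> :: "nat \<Rightarrow> 'a" assume s: "\<forall>n. \<sigma> n \<in> car C"
  have x: "\<sigma> 0 \<in> car C" and y: "\<sigma> 1 \<in> car C" and z: "\<sigma> 2 \<in> car C" using s by auto
  note L = HA_facts[OF assms]
  show "holds C \<sigma> pHA" unfolding pHA_holds Let_def
    apply (intro conjI)
    using L(1) x y z apply blast
    using L(2) x y apply blast
    using L(3) x apply blast
    using L(4) x y z apply blast
    using L(5) x y apply blast
    using L(6) x apply blast
    using L(7) x y apply blast
    using L(8) x y apply blast
    using L(9) x apply blast
    using L(10) x apply blast
    using L(11) x y z apply blast
    done
qed

lemma univ3: "univ_true C p \<Longrightarrow> x \<in> car C \<Longrightarrow> y \<in> car C \<Longrightarrow> z \<in> car C \<Longrightarrow>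
  \<exists>\<sigma>. \<sigma> 0 = x \<and> \<sigma> 1 = y \<and> \<sigma> 2 = z \<and> holds C \<sigma> p"
proof -
  assume u: "univ_true C p" and c: "x \<in> car C" "y \<in> car C" "z \<in> car C"
  let ?s = "\<lambda>n::nat. if n = 0 then x else if n = 1 then y else z"
  have "holds C ?s p" using u c unfolding univ_true_def by simp
  then show ?thesis by (intro exI[of _ ?s]) simp
qed

lemma univ_HA: assumes cl: "clos C" and u: "univ_true C pHA" shows "in_var HA C"
proof -
  have P: "\<forall>x\<in>car C. \<forall>y\<in>car C. \<forall>z\<in>car C.
    mt C (mt C x y) z = mt C x (mt C y z) \<and> mt C x y = mt C y x \<and> mt C x x = x \<and>
    jn C (jn C x y) z = jn C x (jn C y z) \<and> jn C x y = jn C y x \<and> jn C x x = x \<and>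
    mt C x (jn C x y) = x \<and> jn C x (mt C x y) = x \<and> mt C x (tp C) = x \<and> mt C (bt C) x = bt C \<and>
    (mt C (mt C z x) y = mt C z x \<longleftrightarrow> mt C z (im C x y) = z)"
  proof (intro ballI)
    fix x y z assume "x \<in> car C" "y \<in> car C" "z \<in> car C"
    from univ3[OF u this] obtain \<sigma> where s: "\<sigma> 0 = x" "\<sigma> 1 = y" "\<sigma> 2 = z" "holds C \<sigma> pHA" by blast
    note h = s(4)[unfolded pHA_holds Let_def s(1-3)]
    show "mt C (mt C x y) z = mt C x (mt C y z) \<and> mt C x y = mt C y x \<and> mt C x x = x \<and>
    jn C (jn C x y) z = jn C x (jn C y z) \<and> jn C x y = jn C y x \<and> jn C x x = x \<and>
    mt C x (jn C x y) = x \<and> jn C x (mt C x y) = x \<and> mt C x (tp C) = x \<and> mt C (bt C) x = bt C \<and>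
    (mt C (mt C z x) y = mt C z x \<longleftrightarrow> mt C z (im C x y) = z)"
      by (rule h)
  qed
  have t: "tp C \<in> car C" and b: "bt C \<in> car C" and c: "\<forall>x\<in>car C. \<forall>y\<in>car C. mt C x y \<in> car C \<and> jn C x y \<in> car C \<and> im C x y \<in> car C"
    using cl unfolding clos_def by blast+
  have "is_lattice C" unfolding is_lattice_def meet_semilattice_def
    apply (intro conjI)
    using c apply blast
    using P apply blast
    using P apply blast
    using P apply blast
    using c apply blast
    using P apply blast
    using P apply blast
    using P apply blast
    using P apply blast
    using P apply blast
    done
  moreover have "top_max C" unfolding top_max_def hle_def using t P by blast
  moreover have "bot_min C" unfolding bot_min_def hle_def using b P by blast
  moreover have "residuated C" unfolding residuated_def hle_def using c P by blast
  ultimately show ?thesis by simp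
qed

definition tra :: "('c \<Rightarrow> 'd) \<Rightarrow> ('d \<Rightarrow> 'c) \<Rightarrow> 'c halg \<Rightarrow> 'd halg" where
  "tra j k C = \<lparr>car = j ` car C, mt = \<lambda>u v. j (mt C (k u) (k v)), jn = \<lambda>u v. j (jn C (k u) (k v)),
     im = \<lambda>u v. j (im C (k u) (k v)), ng = \<lambda>u. j (ng C (k u)), bt = j (bt C), tp = j (tp C)\<rparr>"

lemma reduct_simps[simp]: "car (reduct C) = car C" "mt (reduct C) = mt C" "jn (reduct C) = jn C"
  "im (reduct C) = im C" "ng (reduct C) = (\<lambda>x. im C x (bt C))" "bt (reduct C) = bt C" "tp (reduct C) = tp C"
  by (simp_all add: reduct_def)

context
  fixes j :: "'c \<Rightarrow> 'd" and k :: "'d \<Rightarrow> 'c"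
  assumes kj: "\<And>x. k (j x) = x"
begin

lemma j_inj: "j x = j y \<longleftrightarrow> x = y" by (metis kj)

lemma tra_eval: "eval (tra j k C) (\<lambda>n. j (\<sigma> n)) t = j (eval C \<sigma> t)"
  by (induction t) (simp_all add: tra_def kj)

lemma tra_holds: "holds (tra j k C) (\<lambda>n. j (\<sigma> n)) p \<longleftrightarrow> holds C \<sigma> p"
  by (induction p) (simp_all add: tra_eval j_inj)

lemma tra_univ: "univ_true (tra j k C) p \<longleftrightarrow> univ_true C p"
proof
  assume H: "univ_true (tra j k C) p"
  show "univ_true C p" unfolding univ_true_def
  proof (intro allI impI)
    fix \<sigma> :: "nat \<Rightarrow> 'c" assume "\<forall>n. \<sigma> n \<in> car C"
    then have "\<forall>n. j (\<sigma> n) \<in> car (tra j k C)" by (simp add: tra_def)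
    note X = this
    have "holds (tra j k C) (\<lambda>n. j (\<sigma> n)) p" using H[unfolded univ_true_def, rule_format, of "\<lambda>n. j (\<sigma> n)"] X by blast
    then show "holds C \<sigma> p" using tra_holds by blast
  qed
next
  assume H: "univ_true C p"
  show "univ_true (tra j k C) p" unfolding univ_true_def
  proof (intro allI impI)
    fix \<sigma> :: "nat \<Rightarrow> 'd" assume s: "\<forall>n. \<sigma> n \<in> car (tra j k C)"
    have e: "(\<lambda>n. j (k (\<sigma> n))) = \<sigma>"
    proof
      fix n obtain x where "\<sigma> n = j x" using s by (auto simp: tra_def)
      then show "j (k (\<sigma> n)) = \<sigma> n" by (simp add: kj)
    qed
    have "\<forall>n. k (\<sigma> n) \<in> car C"
    proof
      fix n obtain x where "\<sigma> n = j x" "x \<in> car C" using s by (auto simp: tra_def)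
      then show "k (\<sigma> n) \<in> car C" by (simp add: kj)
    qed
    then have "holds C (\<lambda>n. k (\<sigma> n)) p" using H[unfolded univ_true_def, rule_format, of "\<lambda>n. k (\<sigma> n)"] by blast
    then have "holds (tra j k C) (\<lambda>n. j (k (\<sigma> n))) p" using tra_holds[of C "\<lambda>n. k (\<sigma> n)" p] by simp
    then show "holds (tra j k C) \<sigma> p" using e by simp
  qed
qed

lemma tra_clos: "clos C \<Longrightarrow> clos (tra j k C)"
  unfolding clos_def tra_def by (auto simp: kj)

lemma tra_HA: "in_var HA C \<Longrightarrow> in_var HA (tra j k C)"
  using univ_HA[OF tra_clos[OF HA_clos] ] HA_univ tra_univ by blast

lemma tra_reduct: "reduct (tra j k C) = tra j k (reduct C)"
  unfolding reduct_def tra_def by (simp add: kj)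

lemma tra_emb: "emb K A D e \<Longrightarrow> emb K A (tra j k D) (\<lambda>x. j (e x))"
  unfolding emb_def tra_def
  apply (simp add: kj)
  apply (intro conjI)
   apply blast
  using inj_on_def j_inj by (smt (verit, ccfv_threshold) inj_on_def)

lemma tra_inU: "in_U K A D \<Longrightarrow> in_U K A (tra j k D)"
  unfolding in_U_def using tra_univ by blast

end

definition gr :: "('a list \<Rightarrow> 'a) \<Rightarrow> 'a list set" where "gr f = {xs @ [f xs] | xs. True}"
definition ungr :: "'a list set \<Rightarrow> ('a list \<Rightarrow> 'a)" where "ungr u = (\<lambda>xs. THE a. xs @ [a] \<in> u)"

lemma ungr_gr: "ungr (gr f) = f"
proof
  fix xs
  have "xs @ [a] \<in> gr f \<longleftrightarrow> a = f xs" for a unfolding gr_def by auto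
  then show "ungr (gr f) xs = f xs" unfolding ungr_def by simp
qed

lemma good_clos: "good K A F C \<Longrightarrow> clos C"
  unfolding good_def using HA_clos by blast

lemma good_eval:
  assumes g: "good K A F C" and t: "trm_in K t" and s: "\<forall>n. \<tau> n \<in> car C"
  shows "eval (reduct C) \<tau> t = eval A \<tau> t \<and> eval (reduct C) \<tau> t \<in> car C"
proof -
  have cl: "clos C" using good_clos[OF g] .
  have cm: "\<And>x y. x \<in> car C \<Longrightarrow> y \<in> car C \<Longrightarrow> mt C x y \<in> car C"
    and cj: "\<And>x y. x \<in> car C \<Longrightarrow> y \<in> car C \<Longrightarrow> jn C x y \<in> car C"
    and ci: "\<And>x y. x \<in> car C \<Longrightarrow> y \<in> car C \<Longrightarrow> im C x y \<in> car C"
    and ct: "tp C \<in> car C" and cb: "bt C \<in> car C"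
    using cl unfolding clos_def by blast+
  have em: "\<And>x y. x \<in> car C \<Longrightarrow> y \<in> car C \<Longrightarrow> mt C x y = mt A x y"
    and ej: "\<And>x y. has_join K \<Longrightarrow> x \<in> car C \<Longrightarrow> y \<in> car C \<Longrightarrow> jn C x y = jn A x y"
    and ei: "\<And>x y. has_imp K \<Longrightarrow> x \<in> car C \<Longrightarrow> y \<in> car C \<Longrightarrow> im C x y = im A x y"
    and en: "\<And>x. has_neg K \<Longrightarrow> x \<in> car C \<Longrightarrow> im C x (bt C) = ng A x"
    and eb: "has_bot K \<Longrightarrow> bt C = bt A" and et: "tp C = tp A"
    using g unfolding good_def by blast+
  show ?thesis using t
  proof (induction t)
    case (V n) then show ?case using s by simp
  next
    case (TMt a b)
    then show ?case using em[of "eval A \<tau> a" "eval A \<tau> b"] cm[of "eval A \<tau> a" "eval A \<tau> b"] by auto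
  next
    case (TJn a b)
    then show ?case using ej[of "eval A \<tau> a" "eval A \<tau> b"] cj[of "eval A \<tau> a" "eval A \<tau> b"] by auto
  next
    case (TIm a b)
    then show ?case using ei[of "eval A \<tau> a" "eval A \<tau> b"] ci[of "eval A \<tau> a" "eval A \<tau> b"] by auto
  next
    case (TNg a)
    then show ?case using en[of "eval A \<tau> a"] ci[of "eval A \<tau> a" "bt C"] cb by auto
  next
    case TBt
    then show ?case using eb cb by simp
  next
    case TTp
    then show ?case using et ct by simp
  qed
qed

lemma good_holds:
  assumes g: "good K A F C" and p: "fm_in K p" and s: "\<forall>n. \<tau> n \<in> car C"
  shows "holds (reduct C) \<tau> p \<longleftrightarrow> holds A \<tau> p"
  using p by (induction p) (simp_all add: good_eval[OF g _ s])

lemma good_univ: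
  assumes g: "good K A F C" and p: "fm_in K p" and u: "univ_true A p"
  shows "univ_true (reduct C) p"
  unfolding univ_true_def
proof (intro allI impI)
  fix \<tau> :: "nat \<Rightarrow> 'a" assume s: "\<forall>n. \<tau> n \<in> car (reduct C)"
  then have s': "\<forall>n. \<tau> n \<in> car C" by simp
  have "car C \<subseteq> car A" using g unfolding good_def by blast
  then have "holds A \<tau> p" using u s' unfolding univ_true_def by blast
  then show "holds (reduct C) \<tau> p" using good_holds[OF g p s'] by simp
qed

context ultraf
begin

lemma reduct_UP: "reduct (UP U Cf) = UP U (\<lambda>i. reduct (Cf i))"
proof -
  have "(\<lambda>x. repU U (\<lambda>i. im (Cf i) (x i) (repU U (\<lambda>i. bt (Cf i)) i))) = (\<lambda>x. repU U (\<lambda>i. im (Cf i) (x i) (bt (Cf i))))"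
  proof
    fix x show "repU U (\<lambda>i. im (Cf i) (x i) (repU U (\<lambda>i. bt (Cf i)) i)) = repU U (\<lambda>i. im (Cf i) (x i) (bt (Cf i)))"
      by (rule rep_cong, rule eq_op2[OF eq_refl rep_eq])
  qed
  then show ?thesis unfolding reduct_def UP_def by simp
qed

lemma UP_clos:
  assumes c: "\<forall>i. clos (Cf i)"
  shows "clos (UP U Cf)"
  unfolding clos_def
proof (intro conjI ballI)
  fix u v assume u: "u \<in> car (UP U Cf)" and v: "v \<in> car (UP U Cf)"
  have X: "{i. u i \<in> car (Cf i)} \<inter> {i. v i \<in> car (Cf i)} \<in> U" using car_ae[OF u] car_ae[OF v] U_int by blast
  show "mt (UP U Cf) u v \<in> car (UP U Cf)" unfolding UP_simps(2)
    by (rule in_car, rule U_up[OF X]) (use c in \<open>auto simp: clos_def\<close>)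
  show "jn (UP U Cf) u v \<in> car (UP U Cf)" unfolding UP_simps(3)
    by (rule in_car, rule U_up[OF X]) (use c in \<open>auto simp: clos_def\<close>)
  show "im (UP U Cf) u v \<in> car (UP U Cf)" unfolding UP_simps(4)
    by (rule in_car, rule U_up[OF X]) (use c in \<open>auto simp: clos_def\<close>)
next
  show "tp (UP U Cf) \<in> car (UP U Cf)" unfolding UP_simps(7)
    by (rule in_car) (use c in \<open>auto simp: clos_def\<close>)
  show "bt (UP U Cf) \<in> car (UP U Cf)" unfolding UP_simps(6)
    by (rule in_car) (use c in \<open>auto simp: clos_def\<close>)
qed

lemma UP_HA:
  assumes h: "\<forall>i. in_var HA (Cf i)"
  shows "in_var HA (UP U Cf)"
proof (rule univ_HA)
  show "clos (UP U Cf)" using UP_clos HA_clos h by blast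
  have "\<forall>i. tp (Cf i) \<in> car (Cf i)" using h HA_clos unfolding clos_def by blast
  then show "univ_true (UP U Cf) pHA" using univ_transfer HA_univ h by blast
qed

end

theorem framework:
  fixes A :: "'a halg" and Cf :: "'i \<Rightarrow> 'a halg" and U :: "'i set set"
  assumes ul: "ultra U" and g: "\<forall>i. good K A (FF i) (Cf i)"
    and inU: "\<forall>x\<in>car A. {i. x \<in> car (Cf i)} \<in> U"
  shows "in_var HA (UP U Cf) \<and> emb K A (reduct (UP U Cf)) (\<lambda>x. repU U (\<lambda>i. x)) \<and> in_U K A (reduct (UP U Cf))"
proof -
  interpret ultraf U by unfold_locales (rule ul)
  have HA: "in_var HA (UP U Cf)" using UP_HA g unfolding good_def by blast
  have iU: "in_U K A (reduct (UP U Cf))" unfolding in_U_def reduct_UP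
  proof (intro allI impI)
    fix p assume p: "fm_in K p" and u: "univ_true A p"
    have "\<forall>i. univ_true (reduct (Cf i)) p" using good_univ[OF _ p u] g by blast
    moreover have "\<forall>i. tp (reduct (Cf i)) \<in> car (reduct (Cf i))"
    proof
      fix i have "clos (Cf i)" using g good_clos by blast
      then show "tp (reduct (Cf i)) \<in> car (reduct (Cf i))" unfolding clos_def by simp
    qed
    ultimately show "univ_true (UP U (\<lambda>i. reduct (Cf i))) p" using univ_transfer[of "\<lambda>i. reduct (Cf i)" p] by simp
  qed
  define e where "e x = repU U (\<lambda>i. x)" for x :: 'a
  have ex: "{i. e x i = x} \<in> U" for x using rep_eq[of "\<lambda>i. x"] unfolding e_def eqU_def by simp
  have sub: "\<forall>i. car (Cf i) \<subseteq> car A" using g unfolding good_def by blast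
  have opsm: "\<forall>i. \<forall>x\<in>car (Cf i). \<forall>y\<in>car (Cf i). mt (Cf i) x y = mt A x y \<and> (has_join K \<longrightarrow> jn (Cf i) x y = jn A x y)
        \<and> (has_imp K \<longrightarrow> im (Cf i) x y = im A x y)" using g unfolding good_def by blast
  have XX: "{i. e x i = x} \<inter> {i. e y i = y} \<inter> {i. x \<in> car (Cf i)} \<inter> {i. y \<in> car (Cf i)} \<in> U"
    if "x \<in> car A" "y \<in> car A" for x y
    using ex[of x] ex[of y] inU that U_int by simp
  have "emb K A (reduct (UP U Cf)) e"
    unfolding emb_def reduct_simps
  proof (intro conjI ballI impI)
    show "e ` car A \<subseteq> car (UP U Cf)"
    proof
      fix z assume "z \<in> e ` car A"
      then obtain x where x: "x \<in> car A" "z = e x" by blast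
      have "{i. (\<lambda>i. x) i \<in> car (Cf i)} \<in> U" using inU x by simp
      then show "z \<in> car (UP U Cf)" unfolding x(2) e_def by (rule in_car)
    qed
    show "inj_on e (car A)"
    proof (rule inj_onI)
      fix x y assume "x \<in> car A" "y \<in> car A" "e x = e y"
      then have "{i. x = y} \<in> U" using rep_iff[of "\<lambda>i. x" "\<lambda>i. y"] unfolding e_def eqU_def by simp
      then show "x = y" by (cases "x = y") auto
    qed
  next
    fix x y assume x: "x \<in> car A" and y: "y \<in> car A"
    show "e (mt A x y) = mt (UP U Cf) (e x) (e y)" unfolding UP_simps e_def
      by (rule rep_cong, rule eq_sub[OF XX[OF x y]]) (use opsm e_def in auto)
  next
    fix x y assume "has_join K" and x: "x \<in> car A" and y: "y \<in> car A"
    then show "e (jn A x y) = jn (UP U Cf) (e x) (e y)" unfolding UP_simps e_def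
      by (intro rep_cong eq_sub[OF XX[OF x y]]) (use opsm e_def in auto)
  next
    fix x y assume "has_imp K" and x: "x \<in> car A" and y: "y \<in> car A"
    then show "e (im A x y) = im (UP U Cf) (e x) (e y)" unfolding UP_simps e_def
      by (intro rep_cong eq_sub[OF XX[OF x y]]) (use opsm e_def in auto)
  next
    fix x assume n: "has_neg K" and x: "x \<in> car A"
    have ng: "\<forall>i. \<forall>x\<in>car (Cf i). im (Cf i) x (bt (Cf i)) = ng A x" using g n unfolding good_def by blast
    have Y: "{i. e x i = x} \<inter> {i. repU U (\<lambda>i. bt (Cf i)) i = bt (Cf i)} \<inter> {i. x \<in> car (Cf i)} \<in> U"
      using ex[of x] rep_eq[of "\<lambda>i. bt (Cf i)"] inU x U_int unfolding eqU_def by simp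
    show "e (ng A x) = im (UP U Cf) (e x) (bt (UP U Cf))" unfolding UP_simps e_def
      by (rule rep_cong, rule eq_sub[OF Y]) (use ng e_def in auto)
  next
    assume "has_bot K"
    then have "\<forall>i. bt (Cf i) = bt A" using g unfolding good_def by blast
    then show "e (bt A) = bt (UP U Cf)" unfolding e_def by simp
  next
    have "\<forall>i. tp (Cf i) = tp A" using g unfolding good_def by blast
    then show "e (tp A) = tp (UP U Cf)" unfolding e_def by simp
  qed
  then show ?thesis using HA iU unfolding e_def by simp
qed

theorem theorem2p7:
  fixes K :: lang and A :: "'a halg"
  assumes "in_var K A"
  shows "\<exists>(B :: 'a list set halg) (e :: 'a \<Rightarrow> 'a list set).
           in_var HA B \<and> emb K A (reduct B) e \<and> in_U K A (reduct B)"
proof -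
  define Cf where "Cf i = (SOME C. good K A (set i \<inter> car A) C)" for i :: "'a list"
  have g: "\<forall>i. good K A (set i \<inter> car A) (Cf i)"
  proof
    fix i :: "'a list"
    have "\<exists>C. good K A (set i \<inter> car A) C" by (rule good_exists[OF assms]) auto
    then show "good K A (set i \<inter> car A) (Cf i)" unfolding Cf_def by (rule someI_ex)
  qed
  define BB where "BB = range (\<lambda>x. {i :: 'a list. x \<in> set i})"
  have fip: "\<forall>T. finite T \<longrightarrow> T \<subseteq> BB \<longrightarrow> \<Inter>T \<noteq> {}"
  proof (intro allI impI)
    fix T assume T: "finite T" "T \<subseteq> BB"
    then obtain X where X: "finite X" "T = (\<lambda>x. {i :: 'a list. x \<in> set i}) ` X"
      unfolding BB_def by (meson finite_subset_image subset_UNIV)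
    obtain xs where "set xs = X" using finite_list[OF X(1)] by blast
    then have "xs \<in> \<Inter>T" using X by auto
    then show "\<Inter>T \<noteq> {}" by blast
  qed
  obtain U where U: "ultra U" "BB \<subseteq> U" using ultra_exists[OF fip] by blast
  interpret ultraf U by unfold_locales (rule U(1))
  have inU: "\<forall>x\<in>car A. {i. x \<in> car (Cf i)} \<in> U"
  proof
    fix x assume x: "x \<in> car A"
    have "{i :: 'a list. x \<in> set i} \<in> U" using U(2) unfolding BB_def by blast
    moreover have "{i :: 'a list. x \<in> set i} \<subseteq> {i. x \<in> car (Cf i)}" using g x unfolding good_def by blast
    ultimately show "{i. x \<in> car (Cf i)} \<in> U" using U_up by blast
  qed
  have F: "in_var HA (UP U Cf) \<and> emb K A (reduct (UP U Cf)) (\<lambda>x. repU U (\<lambda>i. x)) \<and> in_U K A (reduct (UP U Cf))"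
    by (rule framework[OF U(1) g inU])
  have kj: "\<And>f. ungr (gr f) = f" by (rule ungr_gr)
  let ?B = "tra gr ungr (UP U Cf)"
  have "in_var HA ?B" using tra_HA[OF kj] F by blast
  moreover have "emb K A (reduct ?B) (\<lambda>x. gr (repU U (\<lambda>i. x)))"
    using tra_emb[OF kj] F tra_reduct[OF kj] by metis
  moreover have "in_U K A (reduct ?B)"
    using tra_inU[OF kj] F tra_reduct[OF kj] by metis
  ultimately show ?thesis by blast
qed

end
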